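(* Let $\omega_5=e^{2\pi i/5}$ and $\phi=(1+\sqrt5)/2$. Let $G'$ be an all-regular substructure of an oriented graph containing $n_\alpha$ alpha unicyclic components, $n_\beta$ beta unicyclic components and no vanishing unicyclic components. Then $$n_\alpha+n_\beta=\log_5\!\big(\det L_{\omega_5}(G')\cdot\det L_{\omega_5^2}(G')\big),\qquad n_\alpha-n_\beta=\log_{\phi^2}\!\left(\frac{\det L_{\omega_5}(G')}{\det L_{\omega_5^2}(G')}\right).$$
   Context: An oriented graph $G=(V,E)$ is a finite directed graph with no loops, no multiple arcs, and no pair of opposite arcs. A substructure is $(V',E')$ with $V'\subseteq V$, $E'\subseteq E$ (arcs may leave $V'$); for $|\omega|=1$ its Hermitian Laplacian $L_\omega((V',E'))$ is the $V'\times V'$ matrix with diagonal entry at $u$ the number of arcs of $E'$ incident with $u$, and $(u,v)$ entry ($u\ne v$) $-\omega$ if some arc of $E'$ goes $u\to v$, $-\overline\omega$ if some arc of $E'$ goes $v\to u$, $0$ otherwise. Its connected components are the classes $V'_i$ of vertices of $V'$ joined by paths (ignoring directions) with vertices in $V'$ and arcs in $E'$, together with the arcs $E'_i$ of $E'$ having an endpoint in $V'_i$; it is all-regular if $|V'_i|=|E'_i|$ for all $i$. A unicyclic component is a component whose arcs have both ends in $V'_i$ and whose underlying graph is connected with exactly one cycle. For a cycle of length $k$, traverse it in the direction for which the number $g$ of arcs against the traversal satisfies $0\le g\le\lfloor k/2\rfloor$. A unicyclic component with cycle length $k$ and such $g$ is alpha if $k-2g\equiv2,3\pmod5$, beta if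 $k-2g\equiv1,4\pmod5$, vanishing if $k-2g\equiv0\pmod5$. *)

theory Defs
  imports Complex_Main "HOL-Combinatorics.Permutations"
begin

definition oriented_graph :: "'a set \<Rightarrow> ('a \<times> 'a) set \<Rightarrow> bool" where
  "oriented_graph V E \<longleftrightarrow> finite V \<and> E \<subseteq> V \<times> V \<and>
     (\<forall>u. (u, u) \<notin> E) \<and> (\<forall>u v. (u, v) \<in> E \<longrightarrow> (v, u) \<notin> E)"

definition substructure :: "'a set \<Rightarrow> ('a \<times> 'a) set \<Rightarrow> 'a set \<Rightarrow> ('a \<times> 'a) set \<Rightarrow> bool" where
  "substructure V E V' E' \<longleftrightarrow> V' \<subseteq> V \<and> E' \<subseteq> E"

definition herm_lap :: "complex \<Rightarrow> 'a set \<Rightarrow> ('a \<times> 'a) set \<Rightarrow> 'a \<Rightarrow> 'a \<Rightarrow> complex" where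
  "herm_lap \<omega> V' E' u v =
     (if u = v then of_nat (card {e \<in> E'. fst e = u \<or> snd e = u})
      else if (u, v) \<in> E' then - \<omega>
      else if (v, u) \<in> E' then - cnj \<omega>
      else 0)"

definition det_on :: "'a set \<Rightarrow> ('a \<Rightarrow> 'a \<Rightarrow> complex) \<Rightarrow> complex" where
  "det_on I M = (\<Sum>p \<in> {p. p permutes I}. of_int (sign p) * (\<Prod>i\<in>I. M i (p i)))"

definition adj_rel :: "'a set \<Rightarrow> ('a \<times> 'a) set \<Rightarrow> ('a \<times> 'a) set" where
  "adj_rel V' E' = {(u, v). u \<in> V' \<and> v \<in> V' \<and> ((u, v) \<in> E' \<or> (v, u) \<in> E')}"

definition conn_rel :: "'a set \<Rightarrow> ('a \<times> 'a) set \<Rightarrow> ('a \<times> 'a) set" where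
  "conn_rel V' E' = {(u, v). u \<in> V' \<and> v \<in> V' \<and> (u, v) \<in> (adj_rel V' E')\<^sup>*}"

definition components :: "'a set \<Rightarrow> ('a \<times> 'a) set \<Rightarrow> 'a set set" where
  "components V' E' = V' // conn_rel V' E'"

definition comp_arcs :: "('a \<times> 'a) set \<Rightarrow> 'a set \<Rightarrow> ('a \<times> 'a) set" where
  "comp_arcs E' C = {e \<in> E'. fst e \<in> C \<or> snd e \<in> C}"

definition all_regular :: "'a set \<Rightarrow> ('a \<times> 'a) set \<Rightarrow> bool" where
  "all_regular V' E' \<longleftrightarrow> (\<forall>C \<in> components V' E'. card C = card (comp_arcs E' C))"

definition nxt :: "'a list \<Rightarrow> nat \<Rightarrow> 'a" where
  "nxt xs i = xs ! ((i + 1) mod length xs)"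

definition is_cycle_list :: "'a set \<Rightarrow> ('a \<times> 'a) set \<Rightarrow> 'a list \<Rightarrow> bool" where
  "is_cycle_list C A xs \<longleftrightarrow> distinct xs \<and> length xs \<ge> 3 \<and> set xs \<subseteq> C \<and>
     (\<forall>i < length xs. (xs ! i, nxt xs i) \<in> A \<or> (nxt xs i, xs ! i) \<in> A)"

definition cycle_arcs :: "('a \<times> 'a) set \<Rightarrow> 'a list \<Rightarrow> ('a \<times> 'a) set" where
  "cycle_arcs A xs = {e \<in> A. \<exists>i < length xs. e = (xs ! i, nxt xs i) \<or> e = (nxt xs i, xs ! i)}"

definition backward_count :: "('a \<times> 'a) set \<Rightarrow> 'a list \<Rightarrow> nat" where
  "backward_count A xs = card {i. i < length xs \<and> (nxt xs i, xs ! i) \<in> A}"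

text \<open>g is the number of backward arcs for the traversal direction with g \<le> k div 2;
  the value k - 2g.\<close>
definition cycle_value :: "('a \<times> 'a) set \<Rightarrow> 'a list \<Rightarrow> nat" where
  "cycle_value A xs = (let k = length xs; b = backward_count A xs; g = min b (k - b) in k - 2 * g)"

definition unicyclic_comp :: "('a \<times> 'a) set \<Rightarrow> 'a set \<Rightarrow> bool" where
  "unicyclic_comp E' C \<longleftrightarrow> comp_arcs E' C \<subseteq> C \<times> C \<and>
     card {cycle_arcs (comp_arcs E' C) xs | xs. is_cycle_list C (comp_arcs E' C) xs} = 1"

definition alpha_comp :: "('a \<times> 'a) set \<Rightarrow> 'a set \<Rightarrow> bool" where
  "alpha_comp E' C \<longleftrightarrow> unicyclic_comp E' C \<and>
     (\<exists>xs. is_cycle_list C (comp_arcs E' C) xs \<and> cycle_value (comp_arcs E' C) xs mod 5 \<in> {2, 3})"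

definition beta_comp :: "('a \<times> 'a) set \<Rightarrow> 'a set \<Rightarrow> bool" where
  "beta_comp E' C \<longleftrightarrow> unicyclic_comp E' C \<and>
     (\<exists>xs. is_cycle_list C (comp_arcs E' C) xs \<and> cycle_value (comp_arcs E' C) xs mod 5 \<in> {1, 4})"

definition vanishing_comp :: "('a \<times> 'a) set \<Rightarrow> 'a set \<Rightarrow> bool" where
  "vanishing_comp E' C \<longleftrightarrow> unicyclic_comp E' C \<and>
     (\<exists>xs. is_cycle_list C (comp_arcs E' C) xs \<and> cycle_value (comp_arcs E' C) xs mod 5 = 0)"

definition omega5 :: complex where
  "omega5 = exp (2 * pi * \<i> / 5)"

definition golden :: real where
  "golden = (1 + sqrt 5) / 2"

end

theory Submission
  imports Defs "HOL-Combinatorics.Cycles"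
begin


lemma permutes_perm: "finite I \<Longrightarrow> p permutes I \<Longrightarrow> permutation p"
  using permutation_permutes by blast

lemma det_on_cong:
  assumes "\<And>i j. i \<in> I \<Longrightarrow> j \<in> I \<Longrightarrow> M i j = N i j"
  shows "det_on I M = det_on I N"
  unfolding det_on_def
proof (rule sum.cong[OF refl])
  fix p assume "p \<in> {p. p permutes I}"
  hence p: "p permutes I" by simp
  show "of_int (sign p) * (\<Prod>i\<in>I. M i (p i)) = of_int (sign p) * (\<Prod>i\<in>I. N i (p i))"
    using assms permutes_in_image[OF p] by (auto intro!: prod.cong)
qed

lemma det_on_empty: "det_on {} M = 1"
  by (simp add: det_on_def)

lemma det_on_row_single:
  assumes fin: "finite I" and v: "v \<in> I" and z: "\<And>j. j \<in> I \<Longrightarrow> j \<noteq> v \<Longrightarrow> M v j = 0"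
  shows "det_on I M = M v v * det_on (I - {v}) M"
proof -
  let ?t = "\<lambda>p. of_int (sign p) * (\<Prod>i\<in>I. M i (p i))"
  have sub: "{p. p permutes I - {v}} \<subseteq> {p. p permutes I}"
    by (auto intro: permutes_subset)
  have zero: "\<forall>p\<in>{p. p permutes I} - {p. p permutes I - {v}}. ?t p = 0"
  proof
    fix p assume "p \<in> {p. p permutes I} - {p. p permutes I - {v}}"
    hence p: "p permutes I" and np: "\<not> p permutes I - {v}" by auto
    have "p v \<noteq> v"
    proof
      assume "p v = v"
      then have "p permutes I - {v}" using p unfolding permutes_def by auto
      with np show False by simp
    qed
    hence "M v (p v) = 0" using z permutes_in_image[OF p] v by auto
    hence "(\<Prod>i\<in>I. M i (p i)) = 0" using fin v by (intro prod_zero) auto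
    thus "?t p = 0" by simp
  qed
  have "det_on I M = (\<Sum>p\<in>{p. p permutes I - {v}}. ?t p)"
    unfolding det_on_def
    by (rule sum.mono_neutral_right[OF finite_permutations[OF fin] sub zero])
  also have "\<dots> = (\<Sum>p\<in>{p. p permutes I - {v}}. M v v * (of_int (sign p) * (\<Prod>i\<in>I-{v}. M i (p i))))"
  proof (rule sum.cong[OF refl])
    fix p assume "p \<in> {p. p permutes I - {v}}"
    hence "p v = v" by (auto simp: permutes_def)
    then show "?t p = M v v * (of_int (sign p) * (\<Prod>i\<in>I-{v}. M i (p i)))"
      using prod.remove[OF fin v, of "\<lambda>i. M i (p i)"] by (simp add: ac_simps)
  qed
  also have "\<dots> = M v v * det_on (I - {v}) M" by (simp add: det_on_def sum_distrib_left)
  finally show ?thesis .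
qed

lemma det_on_eq_cols:
  assumes fin: "finite I" and u: "u \<in> I" and v: "v \<in> I" and uv: "u \<noteq> v"
    and eq: "\<And>i. i \<in> I \<Longrightarrow> M i u = M i v"
  shows "det_on I M = 0"
proof -
  let ?P = "{p. p permutes I}"
  let ?t = "\<lambda>p. of_int (sign p) * (\<Prod>i\<in>I. M i (p i)) :: complex"
  let ?s = "\<lambda>p. transpose u v \<circ> p"
  have s_in: "?s p \<in> ?P" if "p \<in> ?P" for p
    using that permutes_compose[OF _ permutes_swap_id[OF u v]] by blast
  have ss: "?s (?s p) = p" for p
    by (simp add: comp_assoc[symmetric])
  have bij: "bij_betw ?s ?P ?P"
    by (rule bij_betwI[where g = ?s]) (use s_in ss in auto)
  have ts: "?t (?s p) = - ?t p" if p: "p permutes I" for p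
  proof -
    have "sign (?s p) = - sign p"
      using sign_compose[OF permutation_swap_id permutes_perm[OF fin p]] uv
      by (simp add: sign_swap_id)
    moreover have "(\<Prod>i\<in>I. M i (?s p i)) = (\<Prod>i\<in>I. M i (p i))"
    proof (rule prod.cong[OF refl])
      fix i assume i: "i \<in> I"
      show "M i (?s p i) = M i (p i)"
        using eq[OF i] by (auto simp: transpose_def)
    qed
    ultimately show ?thesis by simp
  qed
  have "det_on I M = sum ?t ?P" by (simp add: det_on_def)
  also have "\<dots> = sum (\<lambda>p. ?t (?s p)) ?P"
    by (rule sum.reindex_bij_betw[OF bij, symmetric])
  also have "\<dots> = - sum ?t ?P"
    using ts by (simp add: sum_negf)
  finally have "det_on I M = - det_on I M" by (simp add: det_on_def)
  thus ?thesis by simp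
qed

lemma perm_preimage:
  assumes p: "p permutes I" and u: "u \<in> I"
  obtains i0 where "i0 \<in> I" "p i0 = u" "\<And>i. p i = u \<Longrightarrow> i = i0"
proof -
  have "u \<in> p ` I" using permutes_image[OF p] u by simp
  then obtain i0 where i0: "i0 \<in> I" "u = p i0" by (rule imageE)
  have un: "i = i0" if "p i = u" for i
  proof -
    have "p i = p i0" using that i0 by simp
    thus ?thesis using injD[OF permutes_inj[OF p]] by blast
  qed
  show ?thesis using that[OF i0(1) i0(2)[symmetric] un] .
qed

lemma det_on_col_op:
  assumes fin: "finite I" and u: "u \<in> I" and v: "v \<in> I" and uv: "u \<noteq> v"
  shows "det_on I (\<lambda>i j. if j = u then M i u + c * M i v else M i j) = det_on I M"
proof -
  define N where "N = (\<lambda>i j. if j = u then M i u + c * M i v else M i j)"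
  define M' where "M' = (\<lambda>i j. if j = u then M i v else M i j)"
  have key: "(\<Prod>i\<in>I. N i (p i)) = (\<Prod>i\<in>I. M i (p i)) + c * (\<Prod>i\<in>I. M' i (p i))"
    if p: "p permutes I" for p
  proof -
    obtain i0 where i0: "i0 \<in> I" "p i0 = u" and un: "\<And>i. p i = u \<Longrightarrow> i = i0"
      using perm_preimage[OF p u] by blast
    have pu: "p i \<noteq> u" if "i \<in> I - {i0}" for i using un that by blast
    have r1: "(\<Prod>i\<in>I-{i0}. N i (p i)) = (\<Prod>i\<in>I-{i0}. M i (p i))"
      by (rule prod.cong[OF refl]) (simp add: N_def pu)
    have r2: "(\<Prod>i\<in>I-{i0}. M' i (p i)) = (\<Prod>i\<in>I-{i0}. M i (p i))"
      by (rule prod.cong[OF refl]) (simp add: M'_def pu)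
    define R where "R = (\<Prod>i\<in>I-{i0}. M i (p i))"
    have e1: "(\<Prod>i\<in>I. N i (p i)) = (M i0 u + c * M i0 v) * R"
      using prod.remove[OF fin i0(1), of "\<lambda>i. N i (p i)"] r1 i0(2) by (simp add: N_def R_def)
    have e2: "(\<Prod>i\<in>I. M i (p i)) = M i0 u * R"
      using prod.remove[OF fin i0(1), of "\<lambda>i. M i (p i)"] i0(2) by (simp add: R_def)
    have e3: "(\<Prod>i\<in>I. M' i (p i)) = M i0 v * R"
      using prod.remove[OF fin i0(1), of "\<lambda>i. M' i (p i)"] r2 i0(2) by (simp add: M'_def R_def)
    show ?thesis unfolding e1 e2 e3 by (simp add: distrib_right mult.assoc)
  qed
  have "det_on I N = (\<Sum>p\<in>{p. p permutes I}. of_int (sign p) * (\<Prod>i\<in>I. M i (p i))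
      + c * (of_int (sign p) * (\<Prod>i\<in>I. M' i (p i))))"
    unfolding det_on_def by (rule sum.cong[OF refl]) (simp add: key distrib_left mult.left_commute)
  also have "\<dots> = det_on I M + c * det_on I M'"
    by (simp add: det_on_def sum.distrib sum_distrib_left)
  also have "det_on I M' = 0"
    by (rule det_on_eq_cols[OF fin u v uv]) (simp add: M'_def uv[symmetric])
  finally show ?thesis by (simp add: N_def)
qed

lemma det_on_zero_col:
  assumes fin: "finite I" and u: "u \<in> I" and z: "\<And>i. i \<in> I \<Longrightarrow> M i u = 0"
  shows "det_on I M = 0"
  unfolding det_on_def
proof (rule sum.neutral, rule ballI)
  fix p assume "p \<in> {p. p permutes I}"
  hence p: "p permutes I" by simp
  obtain i0 where "i0 \<in> I" "p i0 = u" using perm_preimage[OF p u] by blast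
  hence "(\<Prod>i\<in>I. M i (p i)) = 0" using z fin by (intro prod_zero) auto
  thus "of_int (sign p) * (\<Prod>i\<in>I. M i (p i)) = 0" by simp
qed

lemma det_on_add_cols:
  assumes fin: "finite I" and u: "u \<in> I" and J: "J \<subseteq> I - {u}"
  shows "det_on I (\<lambda>i j. if j = u then M i u + (\<Sum>k\<in>J. M i k) else M i j) = det_on I M"
proof -
  have "finite J" using J fin by (meson finite_Diff finite_subset)
  from this J show ?thesis
  proof (induction J rule: finite_induct)
    case empty
    have "(\<lambda>i j. if j = u then M i u + (\<Sum>k\<in>{}. M i k) else M i j) = M"
      by (intro ext) simp
    then show ?case by simp
  next
    case (insert v J)
    let ?N = "\<lambda>i j. if j = u then M i u + (\<Sum>k\<in>J. M i k) else M i j"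
    have v: "v \<in> I" "v \<noteq> u" using insert by auto
    have feq: "(\<lambda>i j. if j = u then M i u + (\<Sum>k\<in>insert v J. M i k) else M i j)
        = (\<lambda>i j. if j = u then ?N i u + 1 * ?N i v else ?N i j)"
    proof (intro ext)
      fix i j
      show "(if j = u then M i u + (\<Sum>k\<in>insert v J. M i k) else M i j)
        = (if j = u then ?N i u + 1 * ?N i v else ?N i j)"
      proof (cases "j = u")
        case True
        have "(\<Sum>k\<in>insert v J. M i k) = M i v + (\<Sum>k\<in>J. M i k)"
          using insert(1,2) by simp
        then show ?thesis using True v(2) by (simp add: ac_simps)
      next
        case False
        then show ?thesis by simp
      qed
    qed
    have "det_on I (\<lambda>i j. if j = u then M i u + (\<Sum>k\<in>insert v J. M i k) else M i j) = det_on I ?N"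
      unfolding feq
      by (rule det_on_col_op[OF fin u v(1) v(2)[symmetric], where M = ?N and c = 1])
    also have "\<dots> = det_on I M" using insert by auto
    finally show ?case .
  qed
qed

lemma det_on_row_sums_zero:
  assumes fin: "finite I" and ne: "I \<noteq> {}" and z: "\<And>i. i \<in> I \<Longrightarrow> (\<Sum>j\<in>I. M i j) = 0"
  shows "det_on I M = 0"
proof -
  obtain u where u: "u \<in> I" using ne by blast
  have "det_on I M = det_on I (\<lambda>i j. if j = u then M i u + (\<Sum>k\<in>I - {u}. M i k) else M i j)"
    by (rule det_on_add_cols[OF fin u, where M = M and J = "I - {u}", symmetric]) auto
  also have "\<dots> = 0"
  proof (rule det_on_zero_col[OF fin u])
    fix i assume i: "i \<in> I"
    show "(if u = u then M i u + (\<Sum>k\<in>I - {u}. M i k) else M i u) = 0"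
      using z[OF i] sum.remove[OF fin u, of "M i"] by simp
  qed
  finally show ?thesis .
qed


lemma det_on_block:
  assumes fA: "finite A" and fB: "finite B" and disj: "A \<inter> B = {}"
    and z1: "\<And>i j. i \<in> A \<Longrightarrow> j \<in> B \<Longrightarrow> M i j = 0"
  shows "det_on (A \<union> B) M = det_on A M * det_on B M"
proof -
  let ?PA = "{p. p permutes A}" and ?PB = "{p. p permutes B}" and ?P = "{p. p permutes A \<union> B}"
  let ?t = "\<lambda>I p. of_int (sign p) * (\<Prod>i\<in>I. M i (p i)) :: complex"
  define h where "h = (\<lambda>(q, r). (q :: 'a \<Rightarrow> 'a) \<circ> (r :: 'a \<Rightarrow> 'a))"
  have hq: "h (q, r) x = q x" if "q permutes A" "r permutes B" "x \<in> A" for q r x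
  proof -
    have "x \<notin> B" using that disj by auto
    hence "r x = x" using permutes_not_in[OF that(2)] by simp
    thus ?thesis by (simp add: h_def)
  qed
  have hr: "h (q, r) x = r x" if "q permutes A" "r permutes B" "x \<in> B" for q r x
  proof -
    have "r x \<in> B" using permutes_in_image[OF that(2)] that(3) by simp
    hence "r x \<notin> A" using disj by auto
    hence "q (r x) = r x" using permutes_not_in[OF that(1)] by simp
    thus ?thesis by (simp add: h_def)
  qed
  have ho: "h (q, r) x = x" if "q permutes A" "r permutes B" "x \<notin> A" "x \<notin> B" for q r x
    using that permutes_not_in[OF that(1)] permutes_not_in[OF that(2)] by (simp add: h_def)
  have inj: "inj_on h (?PA \<times> ?PB)"
  proof (rule inj_onI, clarify)
    fix q r q' r'
    assume a: "q permutes A" "r permutes B" "q' permutes A" "r' permutes B" "h (q, r) = h (q', r')"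
    have "q x = q' x" for x
    proof (cases "x \<in> A")
      case True
      then show ?thesis using hq[OF a(1,2) True] hq[OF a(3,4) True] a(5) by simp
    next
      case False
      then show ?thesis using permutes_not_in[OF a(1)] permutes_not_in[OF a(3)] by simp
    qed
    moreover have "r x = r' x" for x
    proof (cases "x \<in> B")
      case True
      then show ?thesis using hr[OF a(1,2) True] hr[OF a(3,4) True] a(5) by simp
    next
      case False
      then show ?thesis using permutes_not_in[OF a(2)] permutes_not_in[OF a(4)] by simp
    qed
    ultimately show "q = q' \<and> r = r'" by (simp add: fun_eq_iff)
  qed
  have himg: "h ` (?PA \<times> ?PB) \<subseteq> ?P"
  proof clarify
    fix q r assume "q permutes A" "r permutes B"
    then show "h (q, r) permutes A \<union> B"
      unfolding h_def using permutes_compose[OF permutes_subset[OF \<open>r permutes B\<close>, of "A \<union> B"] permutes_subset[OF \<open>q permutes A\<close>, of "A \<union> B"]] by auto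
  qed
  have tq: "?t A q * ?t B r = ?t (A \<union> B) (h (q, r))" if q: "q permutes A" and r: "r permutes B" for q r
  proof -
    have "sign (h (q, r)) = sign q * sign r"
      proof -
      have "permutation q" "permutation r" using fA fB q r permutation_permutes by blast+
      thus ?thesis unfolding h_def by (simp add: sign_compose)
    qed
    moreover have "(\<Prod>i\<in>A \<union> B. M i (h (q, r) i)) = (\<Prod>i\<in>A. M i (q i)) * (\<Prod>i\<in>B. M i (r i))"
    proof -
      have "(\<Prod>i\<in>A \<union> B. M i (h (q, r) i)) = (\<Prod>i\<in>A. M i (h (q, r) i)) * (\<Prod>i\<in>B. M i (h (q, r) i))"
        by (rule prod.union_disjoint[OF fA fB disj])
      also have "(\<Prod>i\<in>A. M i (h (q, r) i)) = (\<Prod>i\<in>A. M i (q i))"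
        by (rule prod.cong[OF refl]) (simp add: hq[OF q r])
      also have "(\<Prod>i\<in>B. M i (h (q, r) i)) = (\<Prod>i\<in>B. M i (r i))"
        by (rule prod.cong[OF refl]) (simp add: hr[OF q r])
      finally show ?thesis .
    qed
    ultimately show ?thesis by simp
  qed
  have zero: "\<forall>p \<in> ?P - h ` (?PA \<times> ?PB). ?t (A \<union> B) p = 0"
  proof
    fix p assume "p \<in> ?P - h ` (?PA \<times> ?PB)"
    hence p: "p permutes A \<union> B" and nim: "p \<notin> h ` (?PA \<times> ?PB)" by auto
    have "\<exists>a\<in>A. p a \<notin> A"
    proof (rule ccontr)
      assume "\<not> (\<exists>a\<in>A. p a \<notin> A)"
      hence pA: "p ` A \<subseteq> A" by auto
      have injp: "inj_on p X" for X using permutes_inj_on[OF p] .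
      have pAA: "p ` A = A" by (rule endo_inj_surj[OF fA pA injp])
      have pB: "p ` B \<subseteq> B"
      proof
        fix y assume "y \<in> p ` B"
        then obtain b where b: "b \<in> B" "y = p b" by blast
        have "p b \<in> A \<union> B" using permutes_in_image[OF p] b(1) by simp
        moreover have "p b \<notin> A"
        proof
          assume "p b \<in> A"
          then obtain a where "a \<in> A" "p a = p b" using pAA by (metis imageE)
          hence "a = b" using injD[OF permutes_inj[OF p]] by blast
          thus False using \<open>a \<in> A\<close> b(1) disj by auto
        qed
        ultimately show "y \<in> B" using b by auto
      qed
      have pBB: "p ` B = B" by (rule endo_inj_surj[OF fB pB injp])
      define q where "q = (\<lambda>x. if x \<in> A then p x else x)"
      define r where "r = (\<lambda>x. if x \<in> B then p x else x)"
      have qp: "q permutes A"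
      proof (rule bij_imp_permutes)
        show "bij_betw q A A"
          using pAA injp unfolding bij_betw_def q_def inj_on_def by (auto simp: image_def)
      qed (simp add: q_def)
      have rp: "r permutes B"
      proof (rule bij_imp_permutes)
        show "bij_betw r B B"
          using pBB injp unfolding bij_betw_def r_def inj_on_def by (auto simp: image_def)
      qed (simp add: r_def)
      have "h (q, r) = p"
      proof
        fix x
        show "h (q, r) x = p x"
        proof (cases "x \<in> A")
          case True thus ?thesis using hq[OF qp rp True] by (simp add: q_def)
        next
          case nA: False
          show ?thesis
          proof (cases "x \<in> B")
            case True thus ?thesis using hr[OF qp rp True] by (simp add: r_def)
          next
            case False
            thus ?thesis using ho[OF qp rp nA False] permutes_not_in[OF p] nA by simp
          qed
        qed
      qed
      hence "p \<in> h ` (?PA \<times> ?PB)" using qp rp by blast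
      thus False using nim by simp
    qed
    then obtain a where a: "a \<in> A" "p a \<notin> A" by blast
    have "p a \<in> B" using a permutes_in_image[OF p] by auto
    hence "M a (p a) = 0" using z1 a(1) by simp
    hence "(\<Prod>i\<in>A \<union> B. M i (p i)) = 0" using fA fB a(1) by (intro prod_zero) auto
    thus "?t (A \<union> B) p = 0" by simp
  qed
  have "det_on A M * det_on B M = (\<Sum>q\<in>?PA. \<Sum>r\<in>?PB. ?t A q * ?t B r)"
    unfolding det_on_def by (simp add: sum_product)
  also have "\<dots> = (\<Sum>qr\<in>?PA \<times> ?PB. ?t (A \<union> B) (h qr))"
    unfolding sum.cartesian_product by (intro sum.cong) (auto simp: tq)
  also have "\<dots> = (\<Sum>p\<in>h ` (?PA \<times> ?PB). ?t (A \<union> B) p)"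
    by (rule sum.reindex[OF inj, symmetric, unfolded comp_def])
  also have "\<dots> = (\<Sum>p\<in>?P. ?t (A \<union> B) p)"
    by (rule sum.mono_neutral_left[OF finite_permutations himg zero]) (use fA fB in simp)
  also have "\<dots> = det_on (A \<union> B) M" by (simp add: det_on_def)
  finally show ?thesis by simp
qed


lemma det_on_partition:
  assumes "finite P" and "\<And>C. C \<in> P \<Longrightarrow> finite C"
    and "\<And>C D. C \<in> P \<Longrightarrow> D \<in> P \<Longrightarrow> C \<noteq> D \<Longrightarrow> C \<inter> D = {}"
    and "\<And>C D i j. C \<in> P \<Longrightarrow> D \<in> P \<Longrightarrow> C \<noteq> D \<Longrightarrow> i \<in> C \<Longrightarrow> j \<in> D \<Longrightarrow> M i j = 0"
  shows "det_on (\<Union>P) M = (\<Prod>C\<in>P. det_on C M)"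
  using assms
proof (induction P rule: finite_induct)
  case empty
  then show ?case by (simp add: det_on_def)
next
  case (insert C P)
  have "det_on (\<Union>(insert C P)) M = det_on (C \<union> \<Union>P) M" by simp
  also have "\<dots> = det_on C M * det_on (\<Union>P) M"
  proof (rule det_on_block)
    show "finite C" using insert by simp
    show "finite (\<Union>P)" using insert by simp
    show "C \<inter> \<Union>P = {}" using insert.prems(2) insert.hyps(2) by blast
    show "M i j = 0" if "i \<in> C" "j \<in> \<Union>P" for i j
      using that insert.prems(3) insert.hyps(2) by blast
  qed
  also have "det_on (\<Union>P) M = (\<Prod>C\<in>P. det_on C M)"
  proof (rule insert.IH)
    show "finite C'" if "C' \<in> P" for C' using insert.prems(1) that by blast
    show "C' \<inter> D = {}" if "C' \<in> P" "D \<in> P" "C' \<noteq> D" for C' D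
      using insert.prems(2) that by blast
    show "M i j = 0" if "C' \<in> P" "D \<in> P" "C' \<noteq> D" "i \<in> C'" "j \<in> D" for C' D i j
      using insert.prems(3) that by blast
  qed
  finally show ?case using insert.hyps by simp
qed


definition cx :: "'a list \<Rightarrow> nat \<Rightarrow> 'a" where
  "cx xs j = xs ! (j mod length xs)"

definition csupp :: "'a list \<Rightarrow> ('a \<Rightarrow> 'a) \<Rightarrow> bool" where
  "csupp xs p \<longleftrightarrow> (\<forall>j. p (cx xs j) \<in> {cx xs j, cx xs (Suc j), cx xs (j + (length xs - 1))})"

lemma sign_cycle_of_list:
  "distinct cs \<Longrightarrow> sign (cycle_of_list cs) = (-1) ^ (length cs - 1)"
proof (induction cs rule: cycle_of_list.induct)
  case (1 i j cs)
  have "sign (cycle_of_list (i # j # cs)) = sign (transpose i j) * sign (cycle_of_list (j # cs))"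
    by (simp add: sign_compose permutation_swap_id permutation_of_cycle)
  also have "\<dots> = - ((-1) ^ (length (j # cs) - 1))" using 1 by (simp add: sign_swap_id)
  also have "\<dots> = (-1) ^ (length (i # j # cs) - 1)" by simp
  finally show ?case .
qed simp_all

lemma mod_neq_shift:
  fixes a d k :: nat
  assumes "0 < d" "d < k"
  shows "(a + d) mod k \<noteq> a mod k"
proof
  assume "(a + d) mod k = a mod k"
  hence "k dvd (a + d) - a" using mod_eq_dvd_iff_nat[of a "a + d" k] by simp
  hence "k dvd d" by simp
  thus False using assms by (meson dvd_imp_le leD)
qed

lemma prod_shift1:
  fixes g :: "nat \<Rightarrow> 'b::comm_monoid_mult"
  assumes "0 < k" "g k = g 0"
  shows "(\<Prod>i<k. g (Suc i)) = (\<Prod>i<k. g i)"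
proof -
  obtain m where k: "k = Suc m" using assms(1) by (cases k) auto
  have "(\<Prod>i<k. g (Suc i)) = (\<Prod>i<m. g (Suc i)) * g 0"
    using assms(2) unfolding k by (simp add: prod.lessThan_Suc)
  also have "\<dots> = (\<Prod>i<k. g i)"
    unfolding k prod.lessThan_Suc_shift by (simp add: mult.commute)
  finally show ?thesis .
qed

lemma prod_shift_mod:
  fixes g :: "nat \<Rightarrow> 'b::comm_monoid_mult"
  assumes k: "0 < k" and per: "\<And>j. g (j + k) = g j"
  shows "(\<Prod>j<k. g (j + c)) = (\<Prod>j<k. g j)"
proof (induction c)
  case 0 show ?case by simp
next
  case (Suc c)
  have "(\<Prod>j<k. g (j + Suc c)) = (\<Prod>j<k. (\<lambda>i. g (i + c)) (Suc j))" by simp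
  also have "\<dots> = (\<Prod>j<k. g (j + c))"
    by (rule prod_shift1[OF k, of "\<lambda>i. g (i + c)"]) (simp add: per add.commute[of k c] per[of c, unfolded add.commute[of c k]])
  finally show ?case using Suc by simp
qed

context
  fixes xs :: "'a list"
  assumes dist: "distinct xs" and k3: "3 \<le> length xs"
begin

lemma kpos: "0 < length xs" using k3 by linarith

lemma cx_eq: "cx xs a = cx xs b \<longleftrightarrow> a mod length xs = b mod length xs"
  unfolding cx_def using nth_eq_iff_index_eq[OF dist] kpos by simp

lemma cx_lt: "i < length xs \<Longrightarrow> cx xs i = xs ! i"
  by (simp add: cx_def)

lemma cx_mod: "cx xs (j mod length xs) = cx xs j"
  by (simp add: cx_def)

lemma cx_period: "cx xs (j + length xs) = cx xs j"
  by (simp add: cx_def)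

lemma cx_in: "cx xs j \<in> set xs"
  unfolding cx_def using kpos by simp

lemma nxt_cx: "nxt xs i = cx xs (Suc i)"
  by (simp add: nxt_def cx_def)

lemma cx_neq: "0 < d \<Longrightarrow> d < length xs \<Longrightarrow> cx xs (a + d) \<noteq> cx xs a"
  unfolding cx_eq by (rule mod_neq_shift)

lemma cx_neq1: "cx xs (Suc a) \<noteq> cx xs a"
  using cx_neq[of 1 a] k3 by simp

lemma cx_neq2: "cx xs (Suc (Suc a)) \<noteq> cx xs a"
  using cx_neq[of 2 a] k3 by simp

lemma cx_prev_neq: "cx xs (a + (length xs - 1)) \<noteq> cx xs a"
  using cx_neq[of "length xs - 1" a] k3 by simp

lemma cx_prev_neq_next: "cx xs (a + (length xs - 1)) \<noteq> cx xs (Suc a)"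
proof -
  have "a + (length xs - 1) = Suc a + (length xs - 2)" using k3 by simp
  thus ?thesis using cx_neq[of "length xs - 2" "Suc a"] k3 by simp
qed

lemma cx_Suc_prev: "cx xs (Suc (a + (length xs - 1))) = cx xs a"
proof -
  have "Suc (a + (length xs - 1)) = a + length xs" using k3 by simp
  thus ?thesis by (metis cx_period)
qed

lemma cx_prev_Suc: "cx xs (Suc a + (length xs - 1)) = cx xs a"
  using cx_Suc_prev by simp

lemma set_cx: "set xs = cx xs ` {..<length xs}"
proof
  show "set xs \<subseteq> cx xs ` {..<length xs}"
  proof
    fix y assume "y \<in> set xs"
    then obtain i where "i < length xs" "y = xs ! i" by (auto simp: in_set_conv_nth)
    thus "y \<in> cx xs ` {..<length xs}" using cx_lt by force
  qed
  show "cx xs ` {..<length xs} \<subseteq> set xs" using cx_in by blast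
qed

lemma inj_cx: "inj_on (cx xs) {..<length xs}"
  by (rule inj_onI) (simp add: cx_eq)

lemma prod_set_cx: "(\<Prod>y\<in>set xs. f y) = (\<Prod>j<length xs. f (cx xs j))"
  by (simp add: set_cx prod.reindex[OF inj_cx])

lemma rot_cx: "cycle_of_list xs (cx xs j) = cx xs (Suc j)"
proof -
  let ?k = "length xs"
  have "map (cycle_of_list xs ^^ 1) xs = rotate 1 xs" by (rule cyclic_rotation[OF dist])
  hence "(map (cycle_of_list xs) xs) ! (j mod ?k) = rotate 1 xs ! (j mod ?k)" by simp
  hence "cycle_of_list xs (xs ! (j mod ?k)) = xs ! ((1 + j mod ?k) mod ?k)"
    using kpos by (simp add: nth_rotate1)
  thus ?thesis by (simp add: cx_def mod_Suc_eq)
qed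

lemma rot_permutes: "cycle_of_list xs permutes set xs"
  by (rule cycle_permutes)

lemma rot_inv_cx: "inv (cycle_of_list xs) (cx xs (Suc j)) = cx xs j"
  using rot_cx[of j] permutes_inverses(2)[OF rot_permutes] by metis

lemma in_set_cx: "y \<in> set xs \<Longrightarrow> \<exists>j<length xs. y = cx xs j"
  using set_cx by auto

lemma fwd:
  assumes p: "p permutes set xs" and sp: "csupp xs p" and i: "i < length xs"
    and a: "p (cx xs i) = cx xs (Suc i)" and b: "p (cx xs (Suc i)) \<noteq> cx xs i"
  shows "p = cycle_of_list xs"
proof -
  let ?k = "length xs"
  have injp: "p x = p y \<Longrightarrow> x = y" for x y using injD[OF permutes_inj[OF p]] by blast
  have P: "p (cx xs (i + t)) = cx xs (Suc (i + t)) \<and> p (cx xs (Suc (i + t))) \<noteq> cx xs (i + t)" for t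
  proof (induction t)
    case 0 thus ?case using a b by simp
  next
    case (Suc t)
    let ?a = "i + t"
    have in3: "p (cx xs (Suc ?a)) \<in> {cx xs (Suc ?a), cx xs (Suc (Suc ?a)), cx xs (Suc ?a + (?k - 1))}"
      using sp unfolding csupp_def by blast
    have n1: "p (cx xs (Suc ?a)) \<noteq> cx xs (Suc ?a)"
    proof
      assume "p (cx xs (Suc ?a)) = cx xs (Suc ?a)"
      hence "p (cx xs (Suc ?a)) = p (cx xs ?a)" using Suc.IH by simp
      hence "cx xs (Suc ?a) = cx xs ?a" by (rule injp)
      thus False using cx_neq1 by simp
    qed
    have n2: "p (cx xs (Suc ?a)) \<noteq> cx xs (Suc ?a + (?k - 1))"
      using Suc.IH cx_prev_Suc by simp
    have c1: "p (cx xs (Suc ?a)) = cx xs (Suc (Suc ?a))" using in3 n1 n2 by blast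
    have c2: "p (cx xs (Suc (Suc ?a))) \<noteq> cx xs (Suc ?a)"
    proof
      assume "p (cx xs (Suc (Suc ?a))) = cx xs (Suc ?a)"
      hence "p (cx xs (Suc (Suc ?a))) = p (cx xs ?a)" using Suc.IH by simp
      hence "cx xs (Suc (Suc ?a)) = cx xs ?a" by (rule injp)
      thus False using cx_neq2 by simp
    qed
    show ?case using c1 c2 by simp
  qed
  show ?thesis
  proof
    fix x
    show "p x = cycle_of_list xs x"
    proof (cases "x \<in> set xs")
      case True
      then obtain j where j: "j < ?k" "x = cx xs j" using in_set_cx by blast
      have e: "i + (?k - i + j) = j + ?k" using i by simp
      have "p (cx xs (j + ?k)) = cx xs (Suc (j + ?k))" using conjunct1[OF P[of "?k - i + j"]] unfolding e .
      hence "p x = cx xs (Suc j)" using j(2) cx_period[of j] cx_period[of "Suc j"] by simp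
      thus ?thesis using rot_cx j(2) by simp
    next
      case False
      thus ?thesis using permutes_not_in[OF p] permutes_not_in[OF rot_permutes] by simp
    qed
  qed
qed


lemma cx_add_cong: "cx xs a = cx xs b \<Longrightarrow> cx xs (a + c) = cx xs (b + c)"
  unfolding cx_eq by (metis mod_add_left_eq)

lemma cx_Suc_cong: "cx xs a = cx xs b \<Longrightarrow> cx xs (Suc a) = cx xs (Suc b)"
  using cx_add_cong[of a b 1] by simp

lemma csupp_inv:
  assumes p: "p permutes set xs" and sp: "csupp xs p"
  shows "csupp xs (inv p)"
  unfolding csupp_def
proof
  fix j
  let ?k = "length xs"
  have "inv p (cx xs j) \<in> set xs" using permutes_in_image[OF permutes_inv[OF p]] cx_in by blast
  then obtain m where m: "inv p (cx xs j) = cx xs m" using in_set_cx by blast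
  have pm: "p (cx xs m) = cx xs j" using m permutes_inverses(1)[OF p] by metis
  have "cx xs j \<in> {cx xs m, cx xs (Suc m), cx xs (m + (?k - 1))}"
    using sp pm unfolding csupp_def by metis
  moreover
  { assume "cx xs j = cx xs m" hence "cx xs m \<in> {cx xs j, cx xs (Suc j), cx xs (j + (?k - 1))}" by simp }
  moreover
  { assume "cx xs j = cx xs (Suc m)"
    hence "cx xs (j + (?k - 1)) = cx xs (Suc m + (?k - 1))" by (rule cx_add_cong)
    hence "cx xs m \<in> {cx xs j, cx xs (Suc j), cx xs (j + (?k - 1))}" using cx_prev_Suc by simp }
  moreover
  { assume "cx xs j = cx xs (m + (?k - 1))"
    hence "cx xs (Suc j) = cx xs (Suc (m + (?k - 1)))" by (rule cx_Suc_cong)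
    hence "cx xs m \<in> {cx xs j, cx xs (Suc j), cx xs (j + (?k - 1))}" using cx_Suc_prev by simp }
  ultimately have "cx xs m \<in> {cx xs j, cx xs (Suc j), cx xs (j + (?k - 1))}"
    by (elim insertE) auto
  thus "inv p (cx xs j) \<in> {cx xs j, cx xs (Suc j), cx xs (j + (?k - 1))}"
    using m by simp
qed

lemma bwd:
  assumes p: "p permutes set xs" and sp: "csupp xs p" and i: "i < length xs"
    and a: "p (cx xs (Suc i)) = cx xs i" and b: "p (cx xs i) \<noteq> cx xs (Suc i)"
  shows "p = inv (cycle_of_list xs)"
proof -
  have q: "inv p permutes set xs" by (rule permutes_inv[OF p])
  have a': "inv p (cx xs i) = cx xs (Suc i)" using a permutes_inverses(2)[OF p] by metis
  have b': "inv p (cx xs (Suc i)) \<noteq> cx xs i"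
  proof
    assume "inv p (cx xs (Suc i)) = cx xs i"
    hence "p (cx xs i) = cx xs (Suc i)" using permutes_inverses(1)[OF p] by metis
    thus False using b by simp
  qed
  have "inv p = cycle_of_list xs" by (rule fwd[OF q csupp_inv[OF p sp] i a' b'])
  hence "inv (inv p) = inv (cycle_of_list xs)" by simp
  thus ?thesis using inv_inv_eq[OF permutes_bij[OF p]] by simp
qed

lemma pairing:
  assumes p: "p permutes set xs" and sp: "csupp xs p"
    and n1: "p \<noteq> cycle_of_list xs" and n2: "p \<noteq> inv (cycle_of_list xs)"
  shows "p (cx xs j) = cx xs (Suc j) \<longleftrightarrow> p (cx xs (Suc j)) = cx xs j"
proof -
  let ?i = "j mod length xs"
  have i: "?i < length xs" using kpos by simp
  have e1: "cx xs ?i = cx xs j" by (rule cx_mod)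
  have e2: "cx xs (Suc ?i) = cx xs (Suc j)" by (rule cx_Suc_cong[OF e1])
  show ?thesis
  proof
    assume a: "p (cx xs j) = cx xs (Suc j)"
    show "p (cx xs (Suc j)) = cx xs j"
    proof (rule ccontr)
      assume "p (cx xs (Suc j)) \<noteq> cx xs j"
      hence "p = cycle_of_list xs" using fwd[OF p sp i] a e1 e2 by simp
      thus False using n1 by simp
    qed
  next
    assume a: "p (cx xs (Suc j)) = cx xs j"
    show "p (cx xs j) = cx xs (Suc j)"
    proof (rule ccontr)
      assume "p (cx xs j) \<noteq> cx xs (Suc j)"
      hence "p = inv (cycle_of_list xs)" using bwd[OF p sp i] a e1 e2 by simp
      thus False using n2 by simp
    qed
  qed
qed


lemma prod_val:
  fixes M :: "'a \<Rightarrow> 'a \<Rightarrow> complex" and w :: "nat \<Rightarrow> complex"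
  assumes H1: "\<And>i. i < length xs \<Longrightarrow> M (xs!i) (xs!i) = 2"
    and H2: "\<And>i. i < length xs \<Longrightarrow> M (xs!i) (nxt xs i) = - w i"
    and H3: "\<And>i. i < length xs \<Longrightarrow> M (nxt xs i) (xs!i) = - cnj (w i)"
    and H4: "\<And>i j. i < length xs \<Longrightarrow> j < length xs \<Longrightarrow> xs!j \<noteq> xs!i \<Longrightarrow> xs!j \<noteq> nxt xs i
               \<Longrightarrow> xs!i \<noteq> nxt xs j \<Longrightarrow> M (xs!i) (xs!j) = 0"
    and Hw: "\<And>i. i < length xs \<Longrightarrow> cnj (w i) * w i = 1"
    and p: "p permutes set xs" and n1: "p \<noteq> cycle_of_list xs" and n2: "p \<noteq> inv (cycle_of_list xs)"
  shows "(\<Prod>y\<in>set xs. M y (p y))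
     = (if csupp xs p then (\<Prod>j<length xs. if p (cx xs j) = cx xs j then 2 else 1) else 0)"
proof -
  let ?k = "length xs"
  have jm: "j mod ?k < ?k" for j using kpos by simp
  have cxm: "cx xs j = xs ! (j mod ?k)" for j by (simp add: cx_def)
  have nxm: "nxt xs (j mod ?k) = cx xs (Suc j)" for j
    unfolding nxt_cx by (rule cx_Suc_cong[OF cx_mod])
  have HX1: "M (cx xs j) (cx xs j) = 2" for j using H1[OF jm] cxm by simp
  have HX2: "M (cx xs j) (cx xs (Suc j)) = - w (j mod ?k)" for j
    using H2[OF jm[of j]] cxm nxm by simp
  have HX3: "M (cx xs (Suc j)) (cx xs j) = - cnj (w (j mod ?k))" for j
    using H3[OF jm[of j]] cxm nxm by simp
  have HX4: "M (cx xs a) (cx xs b) = 0"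
    if "cx xs b \<noteq> cx xs a" "cx xs b \<noteq> cx xs (Suc a)" "cx xs a \<noteq> cx xs (Suc b)" for a b
    using H4[OF jm[of a] jm[of b]] that cxm nxm by simp
  show ?thesis
  proof (cases "csupp xs p")
    case False
    then obtain j where j: "p (cx xs j) \<notin> {cx xs j, cx xs (Suc j), cx xs (j + (?k - 1))}"
      unfolding csupp_def by blast
    have "p (cx xs j) \<in> set xs" using permutes_in_image[OF p] cx_in by blast
    then obtain b where b: "p (cx xs j) = cx xs b" using in_set_cx by blast
    have c3: "cx xs j \<noteq> cx xs (Suc b)"
    proof
      assume "cx xs j = cx xs (Suc b)"
      hence "cx xs (j + (?k - 1)) = cx xs (Suc b + (?k - 1))" by (rule cx_add_cong)
      hence "cx xs b = cx xs (j + (?k - 1))" using cx_prev_Suc by simp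
      thus False using j b by simp
    qed
    have "M (cx xs j) (p (cx xs j)) = 0" unfolding b
      by (rule HX4) (use j b c3 in auto)
    hence "(\<Prod>y\<in>set xs. M y (p y)) = 0" using cx_in[of j] by (intro prod_zero) auto
    thus ?thesis using False by simp
  next
    case True
    define F where "F j = (if p (cx xs j) = cx xs (Suc j) then - w (j mod ?k) else 1)" for j
    define G where "G j = (if p (cx xs (Suc j)) = cx xs j then - cnj (w (j mod ?k)) else 1)" for j
    define D where "D j = (if p (cx xs j) = cx xs j then (2::complex) else 1)" for j
    have fac: "M (cx xs j) (p (cx xs j)) = F j * G (j + (?k - 1)) * D j" for j
    proof -
      have Gs: "G (j + (?k - 1)) = (if p (cx xs j) = cx xs (j + (?k - 1)) then - cnj (w ((j + (?k - 1)) mod ?k)) else 1)"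
        unfolding G_def cx_Suc_prev ..
      have in3: "p (cx xs j) \<in> {cx xs j, cx xs (Suc j), cx xs (j + (?k - 1))}"
        using True unfolding csupp_def by blast
      have d1: "cx xs (Suc j) \<noteq> cx xs j" by (rule cx_neq1)
      have d2: "cx xs (j + (?k - 1)) \<noteq> cx xs j" by (rule cx_prev_neq)
      have d3: "cx xs (j + (?k - 1)) \<noteq> cx xs (Suc j)" by (rule cx_prev_neq_next)
      consider "p (cx xs j) = cx xs j" | "p (cx xs j) = cx xs (Suc j)" | "p (cx xs j) = cx xs (j + (?k - 1))"
        using in3 by blast
      thus ?thesis
      proof cases
        case 1 thus ?thesis using d1 d2 HX1[of j] unfolding Gs by (simp add: F_def D_def)
      next
        case 2 thus ?thesis using d1 d2 d3 HX2[of j] unfolding Gs by (simp add: F_def D_def)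
      next
        case 3
        have "M (cx xs j) (cx xs (j + (?k - 1))) = - cnj (w ((j + (?k - 1)) mod ?k))"
          using HX3[of "j + (?k - 1)"] cx_Suc_prev by simp
        thus ?thesis using 3 d1 d2 d3 unfolding Gs by (simp add: F_def D_def)
      qed
    qed
    have Gper: "G (j + ?k) = G j" for j
      unfolding G_def using cx_period[of j] cx_period[of "Suc j"] by simp
    have FG: "F j * G j = 1" if "j < ?k" for j
    proof (cases "p (cx xs j) = cx xs (Suc j)")
      case True
      hence "p (cx xs (Suc j)) = cx xs j" using pairing[OF p \<open>csupp xs p\<close> n1 n2] by simp
      thus ?thesis using True Hw[OF that] that by (simp add: F_def G_def mult.commute)
    next
      case False
      hence "p (cx xs (Suc j)) \<noteq> cx xs j" using pairing[OF p \<open>csupp xs p\<close> n1 n2] by simp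
      thus ?thesis using False by (simp add: F_def G_def)
    qed
    have "(\<Prod>y\<in>set xs. M y (p y)) = (\<Prod>j<?k. F j * G (j + (?k - 1)) * D j)"
      unfolding prod_set_cx fac ..
    also have "\<dots> = (\<Prod>j<?k. F j) * (\<Prod>j<?k. G (j + (?k - 1))) * (\<Prod>j<?k. D j)"
      by (simp add: prod.distrib)
    also have "(\<Prod>j<?k. G (j + (?k - 1))) = (\<Prod>j<?k. G j)"
      by (rule prod_shift_mod[where g = G, OF kpos Gper])
    also have "(\<Prod>j<?k. F j) * (\<Prod>j<?k. G j) = (\<Prod>j<?k. F j * G j)"
      by (simp add: prod.distrib)
    also have "\<dots> = 1" using FG by simp
    finally show ?thesis using True by (simp add: D_def)
  qed
qed


lemma neg1_pow: "0 < k \<Longrightarrow> (-1::complex) ^ (k - 1) * (-1) ^ k = -1"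
proof -
  assume "0 < k"
  then obtain m where k: "k = Suc m" by (cases k) auto
  have "(-1::complex) ^ m * (-1) ^ m = ((-1) * (-1)) ^ m" by (simp add: power_mult_distrib)
  thus ?thesis unfolding k by simp
qed

lemma cycle_det:
  fixes M :: "'a \<Rightarrow> 'a \<Rightarrow> complex" and w :: "nat \<Rightarrow> complex"
  assumes H1: "\<And>i. i < length xs \<Longrightarrow> M (xs!i) (xs!i) = 2"
    and H2: "\<And>i. i < length xs \<Longrightarrow> M (xs!i) (nxt xs i) = - w i"
    and H3: "\<And>i. i < length xs \<Longrightarrow> M (nxt xs i) (xs!i) = - cnj (w i)"
    and H4: "\<And>i j. i < length xs \<Longrightarrow> j < length xs \<Longrightarrow> xs!j \<noteq> xs!i \<Longrightarrow> xs!j \<noteq> nxt xs i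
               \<Longrightarrow> xs!i \<noteq> nxt xs j \<Longrightarrow> M (xs!i) (xs!j) = 0"
    and Hw: "\<And>i. i < length xs \<Longrightarrow> cnj (w i) * w i = 1"
  shows "det_on (set xs) M = 2 - (\<Prod>i<length xs. w i) - cnj (\<Prod>i<length xs. w i)"
proof -
  let ?k = "length xs"
  let ?r = "cycle_of_list xs"
  let ?P = "{p. p permutes set xs}"
  define M1 where "M1 y z = (if y = z then (2::complex) else
      if (\<exists>i<?k. (y = xs!i \<and> z = nxt xs i) \<or> (z = xs!i \<and> y = nxt xs i)) then -1 else 0)" for y z
  have nx_ne: "xs!i \<noteq> nxt xs i" if "i < ?k" for i
    using cx_neq1[of i] cx_lt[OF that] nxt_cx[of i] by simp
  have M1_1: "M1 (xs!i) (xs!i) = 2" if "i < ?k" for i by (simp add: M1_def)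
  have M1_2: "M1 (xs!i) (nxt xs i) = - 1" if "i < ?k" for i
    using nx_ne[OF that] that unfolding M1_def by auto
  have M1_3: "M1 (nxt xs i) (xs!i) = - cnj 1" if "i < ?k" for i
    using nx_ne[OF that] that unfolding M1_def by auto
  have M1_4: "M1 (xs!i) (xs!j) = 0"
    if ij: "i < ?k" "j < ?k" "xs!j \<noteq> xs!i" "xs!j \<noteq> nxt xs i" "xs!i \<noteq> nxt xs j" for i j
  proof -
    have "\<not> (\<exists>i'<?k. (xs!i = xs!i' \<and> xs!j = nxt xs i') \<or> (xs!j = xs!i' \<and> xs!i = nxt xs i'))"
    proof
      assume "\<exists>i'<?k. (xs!i = xs!i' \<and> xs!j = nxt xs i') \<or> (xs!j = xs!i' \<and> xs!i = nxt xs i')"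
      then obtain i' where i': "i' < ?k" "(xs!i = xs!i' \<and> xs!j = nxt xs i') \<or> (xs!j = xs!i' \<and> xs!i = nxt xs i')"
        by blast
      thus False using ij nth_eq_iff_index_eq[OF dist] by metis
    qed
    thus ?thesis using ij(3) unfolding M1_def by auto
  qed
  have M1w: "cnj (1::complex) * 1 = 1" by simp
  let ?t = "\<lambda>N p. of_int (sign p) * (\<Prod>y\<in>set xs. N y (p y)) :: complex"
  have rP: "?r \<in> ?P" using rot_permutes by simp
  have riP: "inv ?r \<in> ?P" using permutes_inv[OF rot_permutes] by simp
  have rne: "?r \<noteq> inv ?r"
  proof
    assume eq: "?r = inv ?r"
    have e1: "?r (cx xs 0) = cx xs 1" using rot_cx[of 0] by simp
    have "Suc (?k - 1) = ?k" using kpos by simp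
    hence "inv ?r (cx xs ?k) = cx xs (?k - 1)" using rot_inv_cx[of "?k - 1"] by simp
    hence e2: "inv ?r (cx xs 0) = cx xs (?k - 1)" using cx_period[of 0] by simp
    have e: "1 + (?k - 2) = ?k - 1" using k3 by simp
    have "cx xs (1 + (?k - 2)) \<noteq> cx xs 1" by (rule cx_neq) (use k3 in auto)
    hence "cx xs (?k - 1) \<noteq> cx xs 1" unfolding e .
    thus False using eq e1 e2 by simp
  qed
  have split: "det_on (set xs) N = ?t N ?r + ?t N (inv ?r) + (\<Sum>p\<in>?P - {?r, inv ?r}. ?t N p)" for N
  proof -
    have fin: "finite ?P" by (rule finite_permutations) simp
    have "det_on (set xs) N = (\<Sum>p\<in>?P. ?t N p)" by (simp add: det_on_def)
    also have "\<dots> = ?t N ?r + (\<Sum>p\<in>?P - {?r}. ?t N p)"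
      by (rule sum.remove[OF fin rP])
    also have "(\<Sum>p\<in>?P - {?r}. ?t N p) = ?t N (inv ?r) + (\<Sum>p\<in>?P - {?r} - {inv ?r}. ?t N p)"
      by (rule sum.remove) (use fin riP rne in auto)
    also have "?P - {?r} - {inv ?r} = ?P - {?r, inv ?r}" by auto
    finally show ?thesis by (simp add: add.assoc)
  qed
  have same: "(\<Sum>p\<in>?P - {?r, inv ?r}. ?t M p) = (\<Sum>p\<in>?P - {?r, inv ?r}. ?t M1 p)"
  proof (rule sum.cong[OF refl])
    fix p assume "p \<in> ?P - {?r, inv ?r}"
    hence p: "p permutes set xs" "p \<noteq> ?r" "p \<noteq> inv ?r" by auto
    show "?t M p = ?t M1 p"
      using prod_val[of M w, OF H1 H2 H3 H4 Hw p] prod_val[of M1 "\<lambda>_. 1", OF M1_1 M1_2 M1_3 M1_4 M1w p]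
      by simp
  qed
  have sr: "sign ?r = (-1) ^ (?k - 1)" by (rule sign_cycle_of_list[OF dist])
  have sri: "sign (inv ?r) = (-1) ^ (?k - 1)" using sr sign_inverse[OF permutation_of_cycle[of xs]] by simp
  have tr: "(\<Prod>y\<in>set xs. N y (?r y)) = (\<Prod>i<?k. N (xs!i) (nxt xs i))" for N
    unfolding prod_set_cx rot_cx
    by (rule prod.cong[OF refl]) (simp add: cx_lt nxt_cx)
  have tri: "(\<Prod>y\<in>set xs. N y (inv ?r y)) = (\<Prod>i<?k. N (nxt xs i) (xs!i))" for N
  proof -
    have bij: "bij_betw ?r (set xs) (set xs)" by (rule permutes_imp_bij[OF rot_permutes])
    have "(\<Prod>y\<in>set xs. N y (inv ?r y)) = (\<Prod>y\<in>set xs. N (?r y) (inv ?r (?r y)))"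
      by (rule prod.reindex_bij_betw[OF bij, symmetric])
    also have "\<dots> = (\<Prod>y\<in>set xs. N (?r y) y)"
      using permutes_inverses(2)[OF rot_permutes] by simp
    also have "\<dots> = (\<Prod>i<?k. N (nxt xs i) (xs!i))"
      unfolding prod_set_cx rot_cx
      by (rule prod.cong[OF refl]) (simp add: cx_lt nxt_cx)
    finally show ?thesis .
  qed
  have c: "(-1::complex) ^ (?k - 1) * (-1) ^ ?k = -1" by (rule neg1_pow[OF kpos])
  have tM1: "?t M (?r) = - (\<Prod>i<?k. w i)"
  proof -
    have "(\<Prod>i<?k. M (xs!i) (nxt xs i)) = (\<Prod>i<?k. - w i)" by (rule prod.cong) (simp_all add: H2)
    also have "\<dots> = (-1) ^ ?k * (\<Prod>i<?k. w i)" by (simp add: prod_uminus)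
    finally have "?t M ?r = (-1) ^ (?k - 1) * ((-1) ^ ?k * (\<Prod>i<?k. w i))" using tr[of M] sr by simp
    thus ?thesis using c by (simp add: mult.assoc[symmetric])
  qed
  have tM2: "?t M (inv ?r) = - cnj (\<Prod>i<?k. w i)"
  proof -
    have "(\<Prod>i<?k. M (nxt xs i) (xs!i)) = (\<Prod>i<?k. - cnj (w i))" by (rule prod.cong) (simp_all add: H3)
    also have "\<dots> = (-1) ^ ?k * cnj (\<Prod>i<?k. w i)" by (simp add: prod_uminus)
    finally have "?t M (inv ?r) = (-1) ^ (?k - 1) * ((-1) ^ ?k * cnj (\<Prod>i<?k. w i))" using tri[of M] sri by simp
    thus ?thesis using c by (simp add: mult.assoc[symmetric])
  qed
  have tN1: "?t M1 (?r) = - 1"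
  proof -
    have "(\<Prod>i<?k. M1 (xs!i) (nxt xs i)) = (\<Prod>i<?k. - 1)" by (rule prod.cong) (simp_all add: M1_2)
    also have "\<dots> = (-1) ^ ?k" by simp
    finally have "?t M1 ?r = (-1) ^ (?k - 1) * (-1) ^ ?k" using tr[of M1] sr by simp
    thus ?thesis using c by simp
  qed
  have tN2: "?t M1 (inv ?r) = - 1"
  proof -
    have "(\<Prod>i<?k. M1 (nxt xs i) (xs!i)) = (\<Prod>i<?k. - 1)" by (rule prod.cong) (simp_all add: M1_3)
    also have "\<dots> = (-1) ^ ?k" by simp
    finally have "?t M1 (inv ?r) = (-1) ^ (?k - 1) * (-1) ^ ?k" using tri[of M1] sri by simp
    thus ?thesis using c by simp
  qed
  have d1: "det_on (set xs) M1 = 0"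
  proof (rule det_on_row_sums_zero)
    show "finite (set xs)" by simp
    show "set xs \<noteq> {}" using kpos by auto
    fix y assume "y \<in> set xs"
    then obtain i where i: "i < ?k" "y = cx xs i" using in_set_cx by blast
    let ?a = "cx xs (Suc i)" and ?b = "cx xs (i + (?k - 1))"
    have dd: "?a \<noteq> y" "?b \<noteq> y" "?b \<noteq> ?a"
      using i cx_neq1 cx_prev_neq cx_prev_neq_next by auto
    have zero: "M1 y z = 0" if zz: "z \<in> set xs - {y, ?a, ?b}" for z
    proof -
      obtain j where j: "j < ?k" "z = cx xs j" using zz in_set_cx by blast
      have c3: "cx xs i \<noteq> cx xs (Suc j)"
      proof
        assume "cx xs i = cx xs (Suc j)"
        hence "cx xs (i + (?k - 1)) = cx xs (Suc j + (?k - 1))" by (rule cx_add_cong)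
        hence "z = ?b" using cx_prev_Suc j by simp
        thus False using zz by simp
      qed
      show ?thesis using M1_4[OF i(1) j(1)] zz i j c3 by (simp add: cx_lt nxt_cx)
    qed
    have sub: "{y, ?a, ?b} \<subseteq> set xs" using i cx_in by auto
    have "(\<Sum>z\<in>set xs. M1 y z) = (\<Sum>z\<in>{y, ?a, ?b}. M1 y z)"
      by (rule sum.mono_neutral_right[OF _ sub]) (use zero in auto)
    also have "\<dots> = M1 y y + M1 y ?a + M1 y ?b" using dd by (simp add: add.assoc)
    also have "M1 y y = 2" by (simp add: M1_def)
    also have "M1 y ?a = -1" using M1_2[of "i"] i by (simp add: cx_lt nxt_cx)
    also have "M1 y ?b = -1"
    proof -
      let ?m = "(i + (?k - 1)) mod ?k"
      have m: "?m < ?k" using kpos by simp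
      have "M1 (nxt xs ?m) (xs ! ?m) = -1" using M1_3[OF m] by simp
      moreover have "nxt xs ?m = y" using i(2) cx_Suc_prev nxt_cx cx_Suc_cong[OF cx_mod] by metis
      moreover have "xs ! ?m = ?b" using cx_lt[OF m] cx_mod by metis
      ultimately show ?thesis by simp
    qed
    finally show "(\<Sum>z\<in>set xs. M1 y z) = 0" by simp
  qed
  have "det_on (set xs) M = - (\<Prod>i<?k. w i) - cnj (\<Prod>i<?k. w i) + (\<Sum>p\<in>?P - {?r, inv ?r}. ?t M1 p)"
    using split[of M] tM1 tM2 same by simp
  moreover have "(\<Sum>p\<in>?P - {?r, inv ?r}. ?t M1 p) = 2"
    using split[of M1] tN1 tN2 d1 by (simp add: algebra_simps)
  ultimately show ?thesis by simp
qed

end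


definition deg :: "('a \<times> 'a) set \<Rightarrow> 'a \<Rightarrow> nat" where
  "deg A v = card {e \<in> A. fst e = v \<or> snd e = v}"

definition nbr :: "('a \<times> 'a) set \<Rightarrow> 'a \<Rightarrow> 'a set" where
  "nbr A v = {y. (v, y) \<in> A \<or> (y, v) \<in> A}"

definition orient :: "('a \<times> 'a) set \<Rightarrow> bool" where
  "orient A \<longleftrightarrow> (\<forall>u. (u, u) \<notin> A) \<and> (\<forall>u v. (u, v) \<in> A \<longrightarrow> (v, u) \<notin> A)"

lemma herm_diag: "herm_lap \<omega> C A u u = of_nat (deg A u)"
  by (simp add: herm_lap_def deg_def)

lemma herm_indep: "herm_lap \<omega> C A = herm_lap \<omega> C' A"
  by (simp add: herm_lap_def fun_eq_iff)

lemma card_nbr: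
  assumes fA: "finite A" and or: "orient A"
  shows "card (nbr A v) = deg A v"
proof -
  let ?E = "{e \<in> A. fst e = v \<or> snd e = v}"
  define f where "f e = (if fst e = v then snd e else fst e)" for e :: "'a \<times> 'a"
  have inj: "inj_on f ?E"
  proof (rule inj_onI)
    fix e1 e2 assume a: "e1 \<in> ?E" "e2 \<in> ?E" "f e1 = f e2"
    obtain a1 b1 where e1: "e1 = (a1, b1)" by (cases e1)
    obtain a2 b2 where e2: "e2 = (a2, b2)" by (cases e2)
    have irr: "(x, x) \<notin> A" for x using or unfolding orient_def by blast
    have asym: "(x, y) \<in> A \<Longrightarrow> (y, x) \<notin> A" for x y using or unfolding orient_def by blast
    show "e1 = e2"
      using a irr asym unfolding e1 e2 f_def by (auto split: if_splits)
  qed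
  have img: "f ` ?E = nbr A v"
  proof
    show "f ` ?E \<subseteq> nbr A v"
    proof
      fix y assume "y \<in> f ` ?E"
      then obtain e where e: "e \<in> A" "fst e = v \<or> snd e = v" "y = f e" by blast
      obtain a b where ab: "e = (a, b)" by (cases e)
      show "y \<in> nbr A v" using e unfolding ab f_def nbr_def by (auto split: if_splits)
    qed
    show "nbr A v \<subseteq> f ` ?E"
    proof
      fix y assume "y \<in> nbr A v"
      hence "(v, y) \<in> A \<or> (y, v) \<in> A" by (simp add: nbr_def)
      thus "y \<in> f ` ?E"
      proof
        assume a: "(v, y) \<in> A"
        have m: "(v, y) \<in> ?E" using a by simp
        have "y = f (v, y)" by (simp add: f_def)
        from this m show ?thesis by (rule image_eqI)
      next
        assume a: "(y, v) \<in> A"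
        have m: "(y, v) \<in> ?E" using a by simp
        have "y = f (y, v)" by (simp add: f_def)
        from this m show ?thesis by (rule image_eqI)
      qed
    qed
  qed
  show ?thesis unfolding deg_def using card_image[OF inj] img by simp
qed

lemma deg_sum:
  assumes fC: "finite C" and fA: "finite A"
  shows "(\<Sum>v\<in>C. deg A v) = (\<Sum>e\<in>A. card (C \<inter> {fst e, snd e}))"
proof -
  have d: "deg A v = (\<Sum>e\<in>A. if fst e = v \<or> snd e = v then (1::nat) else 0)" for v
    unfolding deg_def card_eq_sum by (rule sum.inter_filter[OF fA])
  have "(\<Sum>v\<in>C. deg A v) = (\<Sum>v\<in>C. \<Sum>e\<in>A. if fst e = v \<or> snd e = v then (1::nat) else 0)"
    by (simp only: d)
  also have "\<dots> = (\<Sum>e\<in>A. \<Sum>v\<in>C. if fst e = v \<or> snd e = v then (1::nat) else 0)"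
    by (rule sum.swap)
  also have "\<dots> = (\<Sum>e\<in>A. card (C \<inter> {fst e, snd e}))"
  proof (rule sum.cong[OF refl])
    fix e
    have "(\<Sum>v\<in>C. if fst e = v \<or> snd e = v then (1::nat) else 0) = card {v \<in> C. fst e = v \<or> snd e = v}"
      unfolding card_eq_sum by (rule sum.inter_filter[OF fC, symmetric])
    also have "{v \<in> C. fst e = v \<or> snd e = v} = C \<inter> {fst e, snd e}" by auto
    finally show "(\<Sum>v\<in>C. if fst e = v \<or> snd e = v then (1::nat) else 0) = card (C \<inter> {fst e, snd e})" .
  qed
  finally show ?thesis .
qed

lemma leaf_det:
  assumes fC: "finite C" and or: "orient A" and fA: "finite A" and v: "v \<in> C" and u: "u \<in> C" "u \<noteq> v"
    and e: "e \<in> A" "e = (v, u) \<or> e = (u, v)"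
    and only: "\<And>e'. e' \<in> A \<Longrightarrow> fst e' = v \<or> snd e' = v \<Longrightarrow> e' = e"
    and w: "cnj \<omega> * \<omega> = 1"
  shows "det_on C (herm_lap \<omega> C A) = det_on (C - {v}) (herm_lap \<omega> (C - {v}) (A - {e}))"
proof -
  let ?M = "herm_lap \<omega> C A"
  let ?M' = "herm_lap \<omega> (C - {v}) (A - {e})"
  define c where "c = - ?M v u"
  define N where "N = (\<lambda>i j. if j = u then ?M i u + c * ?M i v else ?M i j)"
  have irr: "(x, x) \<notin> A" for x using or unfolding orient_def by blast
  have asym: "(x, y) \<in> A \<Longrightarrow> (y, x) \<notin> A" for x y using or unfolding orient_def by blast
  have Ev: "{e' \<in> A. fst e' = v \<or> snd e' = v} = {e}"
  proof
    show "{e' \<in> A. fst e' = v \<or> snd e' = v} \<subseteq> {e}" using only by blast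
    show "{e} \<subseteq> {e' \<in> A. fst e' = v \<or> snd e' = v}" using e by auto
  qed
  have degv: "deg A v = 1" unfolding deg_def Ev by simp
  have Mvv: "?M v v = 1" using degv by (simp add: herm_diag)
  have noarc: "(i, v) \<notin> A \<and> (v, i) \<notin> A" if "i \<noteq> u" for i
  proof -
    have "(i, v) \<notin> A"
    proof
      assume "(i, v) \<in> A"
      hence "(i, v) = e" using only[of "(i, v)"] by simp
      thus False using e(2) that u(2) by auto
    qed
    moreover have "(v, i) \<notin> A"
    proof
      assume "(v, i) \<in> A"
      hence "(v, i) = e" using only[of "(v, i)"] by simp
      thus False using e(2) that u(2) by auto
    qed
    ultimately show ?thesis by simp
  qed
  have Mv0: "?M v j = 0" "?M j v = 0" if "j \<noteq> u" "j \<noteq> v" for j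
    using noarc[OF that(1)] that by (auto simp: herm_lap_def)
  have prod1: "?M v u * ?M u v = 1"
  proof (cases "e = (v, u)")
    case True
    hence "(v, u) \<in> A" "(u, v) \<notin> A" using e asym by auto
    thus ?thesis using u(2) w by (simp add: herm_lap_def mult.commute)
  next
    case False
    hence "(u, v) \<in> A" "(v, u) \<notin> A" using e asym by auto
    thus ?thesis using u(2) w by (simp add: herm_lap_def)
  qed
  have step1: "det_on C N = det_on C ?M"
    unfolding N_def by (rule det_on_col_op[OF fC u(1) v u(2)])
  have rowv: "N v j = 0" if "j \<in> C" "j \<noteq> v" for j
  proof (cases "j = u")
    case True thus ?thesis using Mvv by (simp add: N_def c_def)
  next
    case False thus ?thesis using Mv0[OF False that(2)] by (simp add: N_def)
  qed
  have step2: "det_on C N = N v v * det_on (C - {v}) N"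
    by (rule det_on_row_single[where M = N, OF fC v rowv])
  have Nvv: "N v v = 1" using Mvv u(2) by (simp add: N_def)
  have Eeq: "{e' \<in> A - {e}. fst e' = i \<or> snd e' = i} = {e' \<in> A. fst e' = i \<or> snd e' = i}"
    if "i \<noteq> u" "i \<noteq> v" for i
    using e(2) that by auto
  have degu: "deg (A - {e}) u = deg A u - 1"
  proof -
    have "{e' \<in> A - {e}. fst e' = u \<or> snd e' = u} = {e' \<in> A. fst e' = u \<or> snd e' = u} - {e}" by auto
    moreover have "e \<in> {e' \<in> A. fst e' = u \<or> snd e' = u}" using e by auto
    moreover have "finite {e' \<in> A. fst e' = u \<or> snd e' = u}" using fA by simp
    ultimately show ?thesis unfolding deg_def by simp
  qed
  have degu1: "1 \<le> deg A u"
  proof -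
    have "e \<in> {e' \<in> A. fst e' = u \<or> snd e' = u}" using e by auto
    hence "{e' \<in> A. fst e' = u \<or> snd e' = u} \<noteq> {}" by blast
    thus ?thesis unfolding deg_def using fA by (simp add: Suc_le_eq card_gt_0_iff)
  qed
  have arcs: "((i, j) \<in> A - {e}) = ((i, j) \<in> A)" if "i \<noteq> v" "j \<noteq> v" for i j
    using e(2) that by auto
  have step3: "det_on (C - {v}) N = det_on (C - {v}) ?M'"
  proof (rule det_on_cong)
    fix i j assume ij: "i \<in> C - {v}" "j \<in> C - {v}"
    show "N i j = ?M' i j"
    proof (cases "j = u")
      case False
      show ?thesis
      proof (cases "i = j")
        case True
        thus ?thesis using False ij Eeq[of i] by (simp add: N_def herm_lap_def deg_def)
      next
        case False
        thus ?thesis using \<open>j \<noteq> u\<close> ij arcs[of i j] arcs[of j i] by (simp add: N_def herm_lap_def)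
      qed
    next
      case True
      show ?thesis
      proof (cases "i = u")
        case True
        have "N u u = ?M u u - ?M v u * ?M u v" by (simp add: N_def c_def)
        also have "\<dots> = of_nat (deg A u) - 1" using prod1 by (simp add: herm_diag)
        also have "\<dots> = of_nat (deg (A - {e}) u)" using degu degu1 by (simp add: of_nat_diff)
        also have "\<dots> = ?M' u u" by (simp add: herm_diag)
        finally show ?thesis using True \<open>j = u\<close> by simp
      next
        case False
        have "?M i v = 0" using Mv0(2)[OF False] ij by simp
        hence "N i j = ?M i u" using True by (simp add: N_def)
        thus ?thesis using True False ij arcs[of i u] arcs[of u i] u(2) by (simp add: herm_lap_def)
      qed
    qed
  qed
  show ?thesis using step1 step2 step3 Nvv by simp
qed


definition is_path :: "('a \<times> 'a) set \<Rightarrow> 'a list \<Rightarrow> bool" where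
  "is_path A ps \<longleftrightarrow> distinct ps \<and> (\<forall>i. Suc i < length ps \<longrightarrow> ps ! Suc i \<in> nbr A (ps ! i))"

lemma nbr_sym: "y \<in> nbr A x \<longleftrightarrow> x \<in> nbr A y"
  by (auto simp: nbr_def)

lemma nbr_arc: "y \<in> nbr A x \<longleftrightarrow> (x, y) \<in> A \<or> (y, x) \<in> A"
  by (simp add: nbr_def)

lemma exists_cycle:
  assumes fC: "finite C" and c: "c \<in> C" and sub: "A \<subseteq> C \<times> C" and or: "orient A"
    and two: "\<And>y. y \<in> C \<Longrightarrow> card (nbr A y) = 2"
  shows "\<exists>xs. is_cycle_list C A xs"
proof -
  let ?S = "{ps. is_path A ps \<and> set ps \<subseteq> C \<and> ps \<noteq> []}"
  have nbrC: "nbr A y \<subseteq> C" for y using sub by (auto simp: nbr_def)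
  have irr: "y \<notin> nbr A y" for y using or by (auto simp: nbr_def orient_def)
  have lenb: "length ps \<le> card C" if "ps \<in> ?S" for ps
  proof -
    have "card (set ps) \<le> card C" using that card_mono[OF fC] by auto
    moreover have "card (set ps) = length ps" using that distinct_card by (auto simp: is_path_def)
    ultimately show ?thesis by simp
  qed
  have c1: "[c] \<in> ?S" using c by (simp add: is_path_def)
  have P1: "\<exists>ps\<in>?S. length ps = 1" using c1 by force
  have Pb: "\<forall>m. (\<exists>ps\<in>?S. length ps = m) \<longrightarrow> m \<le> card C" using lenb by blast
  have "\<exists>n. (\<exists>ps\<in>?S. length ps = n) \<and> (\<forall>m. (\<exists>ps\<in>?S. length ps = m) \<longrightarrow> m \<le> n)"
    by (rule Nat.ex_has_greatest_nat[OF P1 Pb])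
  then obtain n where n: "\<exists>ps\<in>?S. length ps = n" "\<And>m. (\<exists>ps\<in>?S. length ps = m) \<Longrightarrow> m \<le> n"
    by blast
  then obtain ps where ps: "ps \<in> ?S" "length ps = n" by blast
  have maxl: "length qs \<le> length ps" if "qs \<in> ?S" for qs using n(2) that ps(2) by blast
  let ?m = "length ps"
  let ?l = "last ps"
  have psP: "is_path A ps" "set ps \<subseteq> C" "ps \<noteq> []" using ps(1) by auto
  have dps: "distinct ps" using psP(1) by (simp add: is_path_def)
  have pth: "ps ! Suc i \<in> nbr A (ps ! i)" if "Suc i < ?m" for i
    using psP(1) that by (simp add: is_path_def)
  have lC: "?l \<in> C" using psP(2,3) last_in_set by blast
  have lnth: "?l = ps ! (?m - 1)" using psP(3) by (simp add: last_conv_nth)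
  have ext: "y \<in> set ps" if yn: "y \<in> nbr A ?l" for y
  proof (rule ccontr)
    assume yn': "y \<notin> set ps"
    have "is_path A (ps @ [y])" unfolding is_path_def
    proof (intro conjI allI impI)
      show "distinct (ps @ [y])" using dps yn' by simp
      fix i assume i: "Suc i < length (ps @ [y])"
      show "(ps @ [y]) ! Suc i \<in> nbr A ((ps @ [y]) ! i)"
      proof (cases "Suc i < ?m")
        case True thus ?thesis using pth[OF True] by (simp add: nth_append)
      next
        case False
        hence si: "Suc i = ?m" using i by simp
        hence "(ps @ [y]) ! Suc i = y" by (simp add: nth_append)
        moreover have "(ps @ [y]) ! i = ?l"
        proof -
          have ii: "i = ?m - 1" using si by simp
          have "i < ?m" using si by simp
          hence "(ps @ [y]) ! i = ps ! i" by (simp add: nth_append)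
          thus ?thesis using lnth ii by simp
        qed
        ultimately show ?thesis using yn by simp
      qed
    qed
    moreover have "set (ps @ [y]) \<subseteq> C" using psP(2) yn nbrC by auto
    ultimately have "ps @ [y] \<in> ?S" by simp
    hence "length (ps @ [y]) \<le> ?m" by (rule maxl)
    thus False by simp
  qed
  have fin_nb: "finite (nbr A ?l)" using nbrC fC finite_subset by blast
  have m2: "2 \<le> ?m"
  proof (rule ccontr)
    assume "\<not> 2 \<le> ?m"
    moreover have "?m > 0" using psP(3) by simp
    ultimately have "?m = 1" by linarith
    hence "set ps = {?l}" using psP(3) lnth by (cases ps) auto
    hence "nbr A ?l \<subseteq> {?l}" using ext by blast
    hence "nbr A ?l = {}" using irr by blast
    thus False using two[OF lC] by simp
  qed
  define q where "q = ps ! (?m - 2)"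
  have qn: "q \<in> nbr A ?l"
  proof -
    have "Suc (?m - 2) < ?m" "Suc (?m - 2) = ?m - 1" using m2 by auto
    hence "ps ! (?m - 1) \<in> nbr A (ps ! (?m - 2))" using pth by metis
    thus ?thesis unfolding q_def lnth by (simp add: nbr_sym)
  qed
  obtain wv where wv: "wv \<in> nbr A ?l" "wv \<noteq> q"
  proof (rule ccontr)
    assume "\<not> thesis"
    hence "nbr A ?l \<subseteq> {q}" using that by blast
    hence "card (nbr A ?l) \<le> 1" using card_mono[of "{q}"] by fastforce
    thus False using two[OF lC] by simp
  qed
  obtain i where i: "i < ?m" "wv = ps ! i" using ext[OF wv(1)] by (auto simp: in_set_conv_nth)
  have "i \<noteq> ?m - 1" using wv(1) i(2) lnth irr by auto
  moreover have "i \<noteq> ?m - 2" using wv(2) i(2) q_def by auto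
  ultimately have i3: "i + 3 \<le> ?m" using i(1) m2 by linarith
  define xs where "xs = drop i ps"
  have lx: "length xs = ?m - i" by (simp add: xs_def)
  have xnth: "xs ! j = ps ! (i + j)" if "j < length xs" for j using that by (simp add: xs_def)
  have "is_cycle_list C A xs" unfolding is_cycle_list_def
  proof (intro conjI allI impI)
    show "distinct xs" using dps by (simp add: xs_def)
    show "3 \<le> length xs" using i3 lx by simp
    show "set xs \<subseteq> C" using psP(2) set_drop_subset[of i ps] by (simp add: xs_def)
    fix j assume j: "j < length xs"
    show "(xs ! j, nxt xs j) \<in> A \<or> (nxt xs j, xs ! j) \<in> A"
    proof (cases "Suc j < length xs")
      case True
      hence "nxt xs j = xs ! Suc j" by (simp add: nxt_def)
      moreover have "ps ! Suc (i + j) \<in> nbr A (ps ! (i + j))" using True lx by (intro pth) simp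
      ultimately show ?thesis using xnth[OF j] xnth[OF True] by (simp add: nbr_arc)
    next
      case False
      hence sj: "Suc j = length xs" using j by simp
      hence "nxt xs j = xs ! 0" by (simp add: nxt_def)
      also have "\<dots> = wv" using i(2) xnth[of 0] i3 lx by simp
      finally have "nxt xs j = wv" .
      moreover have "xs ! j = ?l"
      proof -
        have "i + j = ?m - 1" using sj lx i3 by simp
        thus ?thesis using xnth[OF j] lnth by simp
      qed
      ultimately show ?thesis using wv(1) by (simp add: nbr_arc)
    qed
  qed
  thus ?thesis by blast
qed


definition cz :: "complex \<Rightarrow> ('a \<times> 'a) set \<Rightarrow> 'a list \<Rightarrow> complex" where
  "cz \<omega> A xs = (\<Prod>i<length xs. if (xs ! i, nxt xs i) \<in> A then \<omega> else cnj \<omega>)"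

definition pv :: "'a list \<Rightarrow> nat \<Rightarrow> nat" where
  "pv xs i = (i + (length xs - 1)) mod length xs"

lemma cyc_nb:
  assumes cyc: "is_cycle_list C A xs" and i: "i < length xs"
  shows "pv xs i < length xs" "nxt xs (pv xs i) = xs ! i" "nxt xs i \<in> nbr A (xs ! i)"
    "xs ! pv xs i \<in> nbr A (xs ! i)" "nxt xs i \<noteq> xs ! pv xs i" "xs ! pv xs i \<noteq> xs ! i"
    "nxt xs i \<noteq> xs ! i" "nxt xs i \<in> set xs" "xs ! pv xs i \<in> set xs"
proof -
  have dist: "distinct xs" and k3: "3 \<le> length xs" using cyc by (auto simp: is_cycle_list_def)
  have arc: "nxt xs j \<in> nbr A (xs ! j)" if "j < length xs" for j
    using cyc that unfolding is_cycle_list_def by (simp add: nbr_arc)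
  let ?m = "pv xs i"
  show m: "?m < length xs" unfolding pv_def by (intro mod_less_divisor) (use k3 in linarith)
  have xm: "xs ! ?m = cx xs (i + (length xs - 1))" by (simp add: pv_def cx_def)
  have xi: "xs ! i = cx xs i" using cx_lt[OF dist k3 i] by simp
  have "nxt xs ?m = cx xs (Suc ?m)" by (rule nxt_cx[OF dist k3])
  also have "\<dots> = cx xs (Suc (i + (length xs - 1)))"
    unfolding pv_def by (rule cx_Suc_cong[OF dist k3 cx_mod[OF dist k3]])
  also have "\<dots> = cx xs i" by (rule cx_Suc_prev[OF dist k3])
  finally show nm: "nxt xs ?m = xs ! i" using xi by simp
  show "nxt xs i \<in> nbr A (xs ! i)" by (rule arc[OF i])
  show "xs ! ?m \<in> nbr A (xs ! i)" using arc[OF m] nm by (simp add: nbr_sym)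
  show "nxt xs i \<noteq> xs ! ?m" using cx_prev_neq_next[OF dist k3, of i] xm nxt_cx[OF dist k3, of i] by simp
  show "xs ! ?m \<noteq> xs ! i" using cx_prev_neq[OF dist k3, of i] xm xi by simp
  show "nxt xs i \<noteq> xs ! i" using cx_neq1[OF dist k3, of i] xi nxt_cx[OF dist k3, of i] by simp
  show "nxt xs i \<in> set xs" using nxt_cx[OF dist k3, of i] cx_in[OF dist k3] by simp
  show "xs ! ?m \<in> set xs" using m by simp
qed

lemma finite_nbr: "finite A \<Longrightarrow> finite (nbr A v)"
proof -
  assume fA: "finite A"
  have "nbr A v \<subseteq> fst ` A \<union> snd ` A" by (force simp: nbr_def)
  thus ?thesis using fA finite_subset by blast
qed

lemma cycle_nbr:
  assumes cyc: "is_cycle_list C A xs" and fA: "finite A" and i: "i < length xs"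
    and two: "card (nbr A (xs ! i)) = 2"
  shows "nbr A (xs ! i) = {nxt xs i, xs ! pv xs i}"
proof -
  have "{nxt xs i, xs ! pv xs i} = nbr A (xs ! i)"
  proof (rule card_seteq[OF finite_nbr[OF fA]])
    show "{nxt xs i, xs ! pv xs i} \<subseteq> nbr A (xs ! i)" using cyc_nb[OF cyc i] by simp
    show "card (nbr A (xs ! i)) \<le> card {nxt xs i, xs ! pv xs i}" using cyc_nb[OF cyc i] two by simp
  qed
  thus ?thesis by simp
qed

lemma cycle_all:
  assumes cyc: "is_cycle_list C A xs" and fA: "finite A" and sub: "A \<subseteq> C \<times> C"
    and two: "\<And>y. y \<in> C \<Longrightarrow> card (nbr A y) = 2"
    and conn: "\<And>x y. x \<in> C \<Longrightarrow> y \<in> C \<Longrightarrow> (x, y) \<in> (adj_rel C A)\<^sup>*"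
  shows "set xs = C" "cycle_arcs A xs = A"
proof -
  have sC: "set xs \<subseteq> C" and k3: "3 \<le> length xs" using cyc by (auto simp: is_cycle_list_def)
  have nb: "nbr A (xs ! i) = {nxt xs i, xs ! pv xs i}" if "i < length xs" for i
  proof -
    have "xs ! i \<in> C" using sC that by auto
    thus ?thesis using cycle_nbr[OF cyc fA that two[OF \<open>xs ! i \<in> C\<close>]] by simp
  qed
  have closed: "nbr A y \<subseteq> set xs" if yx: "y \<in> set xs" for y
  proof -
    obtain i where i: "i < length xs" "y = xs ! i" using yx by (auto simp: in_set_conv_nth)
    show ?thesis using nb[OF i(1)] cyc_nb[OF cyc i(1)] i(2) by simp
  qed
  show sx: "set xs = C"
  proof
    show "set xs \<subseteq> C" by (rule sC)
    show "C \<subseteq> set xs"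
    proof
      fix c assume c: "c \<in> C"
      have x0: "xs ! 0 \<in> set xs" using k3 by (intro nth_mem) linarith
      have "(xs ! 0, c) \<in> (adj_rel C A)\<^sup>*" using conn x0 sC c by blast
      thus "c \<in> set xs"
      proof (induction rule: rtrancl_induct)
        case base thus ?case using x0 .
      next
        case (step y z)
        hence "z \<in> nbr A y" by (auto simp: adj_rel_def nbr_def)
        thus ?case using closed[OF step.IH] by blast
      qed
    qed
  qed
  show "cycle_arcs A xs = A"
  proof
    show "cycle_arcs A xs \<subseteq> A" by (auto simp: cycle_arcs_def)
    show "A \<subseteq> cycle_arcs A xs"
    proof
      fix e assume e: "e \<in> A"
      obtain a b where ab: "e = (a, b)" by (cases e)
      have "a \<in> C" using e ab sub by auto
      then obtain i where i: "i < length xs" "a = xs ! i" using sx by (auto simp: in_set_conv_nth)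
      have "b \<in> nbr A a" using e ab by (simp add: nbr_def)
      hence "b = nxt xs i \<or> b = xs ! pv xs i" using nb[OF i(1)] i(2) by simp
      thus "e \<in> cycle_arcs A xs"
      proof
        assume "b = nxt xs i"
        thus ?thesis using e ab i unfolding cycle_arcs_def by blast
      next
        assume bm: "b = xs ! pv xs i"
        have "e = (nxt xs (pv xs i), xs ! pv xs i)" using ab i(2) bm cyc_nb(2)[OF cyc i(1)] by simp
        thus ?thesis using e cyc_nb(1)[OF cyc i(1)] unfolding cycle_arcs_def by blast
      qed
    qed
  qed
qed

lemma cycle_det_herm:
  assumes cyc: "is_cycle_list C A xs" and or: "orient A"
    and nb: "\<And>i. i < length xs \<Longrightarrow> nbr A (xs ! i) = {nxt xs i, xs ! pv xs i}"
    and fA: "finite A" and w: "cnj \<omega> * \<omega> = 1"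
  shows "det_on (set xs) (herm_lap \<omega> C A) = 2 - cz \<omega> A xs - cnj (cz \<omega> A xs)"
proof -
  have dist: "distinct xs" and k3: "3 \<le> length xs" using cyc by (auto simp: is_cycle_list_def)
  let ?M = "herm_lap \<omega> C A"
  define wf where "wf i = (if (xs ! i, nxt xs i) \<in> A then \<omega> else cnj \<omega>)" for i
  have asym: "(x, y) \<in> A \<Longrightarrow> (y, x) \<notin> A" for x y using or unfolding orient_def by blast
  have "det_on (set xs) ?M = 2 - (\<Prod>i<length xs. wf i) - cnj (\<Prod>i<length xs. wf i)"
  proof (rule cycle_det[OF dist k3])
    fix i assume i: "i < length xs"
    have nbi: "nbr A (xs ! i) = {nxt xs i, xs ! pv xs i}" by (rule nb[OF i])
    note c = cyc_nb[OF cyc i]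
    show "?M (xs ! i) (xs ! i) = 2"
    proof -
      have "deg A (xs ! i) = card (nbr A (xs ! i))" using card_nbr[OF fA or] by simp
      also have "\<dots> = 2" using nbi c by simp
      finally show ?thesis by (simp add: herm_diag)
    qed
    have arc: "(xs ! i, nxt xs i) \<in> A \<or> (nxt xs i, xs ! i) \<in> A" using c(3) by (simp add: nbr_arc)
    show "?M (xs ! i) (nxt xs i) = - wf i"
      using c(7) arc by (auto simp: herm_lap_def wf_def)
    show "?M (nxt xs i) (xs ! i) = - cnj (wf i)"
      using c(7) arc asym by (auto simp: herm_lap_def wf_def)
    show "cnj (wf i) * wf i = 1" using w by (simp add: wf_def mult.commute)
  next
    fix i j assume i: "i < length xs" and j: "j < length xs"
      and n1: "xs ! j \<noteq> xs ! i" and n2: "xs ! j \<noteq> nxt xs i" and n3: "xs ! i \<noteq> nxt xs j"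
    have "xs ! j \<noteq> xs ! pv xs i"
    proof
      assume "xs ! j = xs ! pv xs i"
      hence "j = pv xs i" using nth_eq_iff_index_eq[OF dist j cyc_nb(1)[OF cyc i]] by simp
      thus False using n3 cyc_nb(2)[OF cyc i] by simp
    qed
    hence "xs ! j \<notin> nbr A (xs ! i)" using nb[OF i] n2 by simp
    thus "?M (xs ! i) (xs ! j) = 0" using n1 by (auto simp: herm_lap_def nbr_def)
  qed
  thus ?thesis by (simp add: cz_def wf_def)
qed


definition comp_ok :: "'a set \<Rightarrow> ('a \<times> 'a) set \<Rightarrow> bool" where
  "comp_ok C A \<longleftrightarrow> finite C \<and> finite A \<and> C \<noteq> {} \<and> orient A \<and> (\<forall>e\<in>A. fst e \<in> C \<or> snd e \<in> C)
     \<and> (\<forall>x\<in>C. \<forall>y\<in>C. (x, y) \<in> (adj_rel C A)\<^sup>*) \<and> card C = card A"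

lemma leaf_conn:
  assumes conn: "\<And>x y. x \<in> C \<Longrightarrow> y \<in> C \<Longrightarrow> (x, y) \<in> (adj_rel C A)\<^sup>*"
    and u: "u \<in> C" "u \<noteq> v" and euv: "e = (v, u) \<or> e = (u, v)"
    and only: "\<And>e'. e' \<in> A \<Longrightarrow> fst e' = v \<or> snd e' = v \<Longrightarrow> e' = e"
    and x: "x \<in> C - {v}" and y: "y \<in> C - {v}"
  shows "(x, y) \<in> (adj_rel (C - {v}) (A - {e}))\<^sup>*"
proof -
  let ?R = "adj_rel (C - {v}) (A - {e})"
  define \<pi> where "\<pi> z = (if z = v then u else z)" for z
  have step: "(\<pi> a, \<pi> b) \<in> ?R\<^sup>*" if ab: "(a, b) \<in> adj_rel C A" for a b
  proof -
    have abC: "a \<in> C" "b \<in> C" and arc: "(a, b) \<in> A \<or> (b, a) \<in> A"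
      using ab by (auto simp: adj_rel_def)
    show ?thesis
    proof (cases "a = v")
      case True
      have "b = u"
      proof (cases "(a, b) \<in> A")
        case True
        hence "(a, b) = e" using only[of "(a, b)"] \<open>a = v\<close> by simp
        thus ?thesis using euv \<open>a = v\<close> u(2) by auto
      next
        case False
        hence "(b, a) \<in> A" using arc by simp
        hence "(b, a) = e" using only[of "(b, a)"] \<open>a = v\<close> by simp
        thus ?thesis using euv \<open>a = v\<close> u(2) by auto
      qed
      thus ?thesis using True u(2) by (simp add: \<pi>_def)
    next
      case av: False
      show ?thesis
      proof (cases "b = v")
        case True
        have "a = u"
        proof (cases "(a, b) \<in> A")
          case True
          hence "(a, b) = e" using only[of "(a, b)"] \<open>b = v\<close> by simp
          thus ?thesis using euv \<open>b = v\<close> u(2) by auto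
        next
          case False
          hence "(b, a) \<in> A" using arc by simp
          hence "(b, a) = e" using only[of "(b, a)"] \<open>b = v\<close> by simp
          thus ?thesis using euv \<open>b = v\<close> u(2) by auto
        qed
        thus ?thesis using True u(2) by (simp add: \<pi>_def)
      next
        case bv: False
        have "(a, b) \<noteq> e" "(b, a) \<noteq> e" using euv av bv by auto
        hence "(a, b) \<in> ?R" using abC arc av bv by (auto simp: adj_rel_def)
        thus ?thesis using av bv by (simp add: \<pi>_def)
      qed
    qed
  qed
  have "(x, y) \<in> (adj_rel C A)\<^sup>*" using conn x y by blast
  hence "(\<pi> x, \<pi> y) \<in> ?R\<^sup>*"
  proof (induction rule: rtrancl_induct)
    case base thus ?case by simp
  next
    case (step b c)
    thus ?case using step(2)[THEN \<open>\<And>a b. (a, b) \<in> adj_rel C A \<Longrightarrow> (\<pi> a, \<pi> b) \<in> ?R\<^sup>*\<close>] by simp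
  qed
  thus ?thesis using x y by (simp add: \<pi>_def)
qed

lemma leaf_not_on_cycle:
  assumes cyc: "is_cycle_list C A xs" and u: "u \<noteq> v" and euv: "e = (v, u) \<or> e = (u, v)"
    and only: "\<And>e'. e' \<in> A \<Longrightarrow> fst e' = v \<or> snd e' = v \<Longrightarrow> e' = e"
  shows "v \<notin> set xs"
proof
  assume "v \<in> set xs"
  then obtain i where i: "i < length xs" "v = xs ! i" by (auto simp: in_set_conv_nth)
  have nb: "y = u" if "y \<in> nbr A v" for y
  proof (cases "(v, y) \<in> A")
    case True
    hence "(v, y) = e" using only[of "(v, y)"] by simp
    thus ?thesis using euv u by auto
  next
    case False
    hence "(y, v) \<in> A" using that by (simp add: nbr_def)
    hence "(y, v) = e" using only[of "(y, v)"] by simp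
    thus ?thesis using euv u by auto
  qed
  note c = cyc_nb[OF cyc i(1)]
  have "nxt xs i = u" using nb c(3) i(2) by simp
  moreover have "xs ! pv xs i = u" using nb c(4) i(2) by simp
  ultimately show False using c(5) by simp
qed

lemma comp_thm:
  assumes "comp_ok C A"
  shows "(\<not> A \<subseteq> C \<times> C \<and> (\<forall>\<omega>. cnj \<omega> * \<omega> = 1 \<longrightarrow> det_on C (herm_lap \<omega> C A) = 1))
       \<or> (A \<subseteq> C \<times> C \<and> (\<exists>xs. is_cycle_list C A xs)
          \<and> card {cycle_arcs A xs |xs. is_cycle_list C A xs} = 1
          \<and> (\<forall>xs \<omega>. is_cycle_list C A xs \<longrightarrow> cnj \<omega> * \<omega> = 1 \<longrightarrow>
               det_on C (herm_lap \<omega> C A) = 2 - cz \<omega> A xs - cnj (cz \<omega> A xs)))"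
  using assms
proof (induction "card C" arbitrary: C A rule: less_induct)
  case less
  from less.prems have fC: "finite C" and fA: "finite A" and ne: "C \<noteq> {}" and or: "orient A"
    and touch: "\<And>e. e \<in> A \<Longrightarrow> fst e \<in> C \<or> snd e \<in> C"
    and conn: "\<And>x y. x \<in> C \<Longrightarrow> y \<in> C \<Longrightarrow> (x, y) \<in> (adj_rel C A)\<^sup>*" and cd: "card C = card A"
    unfolding comp_ok_def by auto
  have irr: "(x, x) \<notin> A" for x using or unfolding orient_def by blast
  have asym: "(x, y) \<in> A \<Longrightarrow> (y, x) \<notin> A" for x y using or unfolding orient_def by blast
  have deg1: "1 \<le> deg A v" if v: "v \<in> C" for v
  proof -
    have "\<exists>e\<in>A. fst e = v \<or> snd e = v"
    proof (cases "\<exists>y\<in>C. y \<noteq> v")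
      case True
      then obtain y where y: "y \<in> C" "y \<noteq> v" by blast
      have "(v, y) \<in> (adj_rel C A)\<^sup>*" using conn v y(1) by blast
      then obtain z where "(v, z) \<in> adj_rel C A" using y(2) by (cases rule: converse_rtranclE) auto
      hence "(v, z) \<in> A \<or> (z, v) \<in> A" by (simp add: adj_rel_def)
      thus ?thesis by force
    next
      case False
      hence "C = {v}" using v by blast
      hence "card A = 1" using cd by simp
      then obtain e where "A = {e}" by (rule card_1_singletonE)
      hence "e \<in> A" "fst e \<in> C \<or> snd e \<in> C" using touch by auto
      thus ?thesis using \<open>C = {v}\<close> by auto
    qed
    hence "{e \<in> A. fst e = v \<or> snd e = v} \<noteq> {}" by blast
    moreover have "finite {e \<in> A. fst e = v \<or> snd e = v}" using fA by simp
    ultimately show ?thesis unfolding deg_def by (simp add: Suc_le_eq card_gt_0_iff)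
  qed
  show ?case
  proof (cases "\<exists>v\<in>C. deg A v \<le> 1")
    case True
    then obtain v where v: "v \<in> C" "deg A v \<le> 1" by blast
    hence "deg A v = 1" using deg1[OF v(1)] by simp
    then obtain e where Ev: "{e' \<in> A. fst e' = v \<or> snd e' = v} = {e}"
      unfolding deg_def by (rule card_1_singletonE)
    have eA: "e \<in> A" "fst e = v \<or> snd e = v" using Ev by auto
    have only: "e' = e" if "e' \<in> A" "fst e' = v \<or> snd e' = v" for e'
      using Ev that by blast
    define u where "u = (if fst e = v then snd e else fst e)"
    have euv: "e = (v, u) \<or> e = (u, v)" using eA(2) unfolding u_def by (cases e) auto
    have uv: "u \<noteq> v" using euv eA(1) irr by auto
    show ?thesis
    proof (cases "u \<in> C")
      case False
      have Cv: "C = {v}"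
      proof (rule ccontr)
        assume "C \<noteq> {v}"
        then obtain y where y: "y \<in> C" "y \<noteq> v" using v(1) by blast
        have "(v, y) \<in> (adj_rel C A)\<^sup>*" using conn v(1) y(1) by blast
        then obtain z where z: "(v, z) \<in> adj_rel C A" using y(2) by (cases rule: converse_rtranclE) auto
        hence zC: "z \<in> C" and arc: "(v, z) \<in> A \<or> (z, v) \<in> A" by (auto simp: adj_rel_def)
        have "z = u"
        proof (cases "(v, z) \<in> A")
          case True
          hence "(v, z) = e" using only[of "(v, z)"] by simp
          thus ?thesis using euv uv by auto
        next
          case False
          hence "(z, v) \<in> A" using arc by simp
          hence "(z, v) = e" using only[of "(z, v)"] by simp
          thus ?thesis using euv uv by auto
        qed
        thus False using zC False by simp
      qed
      have "\<not> A \<subseteq> C \<times> C" using eA(1) euv False by auto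
      moreover have "det_on C (herm_lap \<omega> C A) = 1" for \<omega>
      proof -
        have "det_on C (herm_lap \<omega> C A) = herm_lap \<omega> C A v v * det_on (C - {v}) (herm_lap \<omega> C A)"
          by (rule det_on_row_single[OF fC v(1)]) (use Cv in auto)
        also have "C - {v} = {}" using Cv by simp
        finally show ?thesis using \<open>deg A v = 1\<close> by (simp add: herm_diag det_on_empty)
      qed
      ultimately show ?thesis by blast
    next
      case True
      let ?C = "C - {v}" and ?A = "A - {e}"
      have touch': "fst e' \<in> ?C \<or> snd e' \<in> ?C" if "e' \<in> ?A" for e'
      proof -
        have "fst e' \<noteq> v" "snd e' \<noteq> v" using only[of e'] that by auto
        thus ?thesis using touch[of e'] that by auto
      qed
      have ok': "comp_ok ?C ?A"
        unfolding comp_ok_def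
      proof (intro conjI ballI)
        show "finite ?C" using fC by simp
        show "finite ?A" using fA by simp
        show "?C \<noteq> {}" using True uv by blast
        show "orient ?A" using or by (auto simp: orient_def)
        show "fst e' \<in> ?C \<or> snd e' \<in> ?C" if "e' \<in> ?A" for e' using touch'[OF that] .
        show "(x, y) \<in> (adj_rel ?C ?A)\<^sup>*" if "x \<in> ?C" "y \<in> ?C" for x y
          by (rule leaf_conn[OF conn True uv euv only that]) auto
        show "card ?C = card ?A" using cd fC fA v(1) eA(1) by (simp add: card_Diff_singleton)
      qed
      have lt: "card ?C < card C" using fC v(1) by (rule card_Diff1_less)
      note IH = less.hyps[OF lt ok']
      have det_eq: "det_on C (herm_lap \<omega> C A) = det_on ?C (herm_lap \<omega> ?C ?A)" if w: "cnj \<omega> * \<omega> = 1" for \<omega>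
        by (rule leaf_det[OF fC or fA v(1) True uv eA(1) euv only w]) auto
      have noe: "(a, b) \<noteq> e" if "a \<noteq> v" "b \<noteq> v" for a b using euv that by auto
      have sub_eq: "A \<subseteq> C \<times> C \<longleftrightarrow> ?A \<subseteq> ?C \<times> ?C"
      proof
        assume a: "A \<subseteq> C \<times> C"
        show "?A \<subseteq> ?C \<times> ?C"
        proof
          fix e' assume e': "e' \<in> ?A"
          have "fst e' \<noteq> v" "snd e' \<noteq> v" using only[of e'] e' by auto
          thus "e' \<in> ?C \<times> ?C" using a e' by (cases e') auto
        qed
      next
        assume a: "?A \<subseteq> ?C \<times> ?C"
        show "A \<subseteq> C \<times> C"
        proof
          fix e' assume e': "e' \<in> A"
          show "e' \<in> C \<times> C"
          proof (cases "e' = e")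
            case True thus ?thesis using euv v(1) \<open>u \<in> C\<close> by auto
          next
            case False thus ?thesis using a e' by auto
          qed
        qed
      qed
      have cyc_eq: "is_cycle_list C A xs \<longleftrightarrow> is_cycle_list ?C ?A xs" for xs
      proof
        assume cyc: "is_cycle_list C A xs"
        have vx: "v \<notin> set xs" by (rule leaf_not_on_cycle[OF cyc uv euv only]) auto
        have arcs: "(xs ! i, nxt xs i) \<in> A \<longleftrightarrow> (xs ! i, nxt xs i) \<in> ?A" if i: "i < length xs" for i
        proof -
          have "xs ! i \<noteq> v" "nxt xs i \<noteq> v" using vx cyc_nb(8)[OF cyc i] i by (auto simp: nth_mem)
          thus ?thesis using noe by auto
        qed
        have arcs': "(nxt xs i, xs ! i) \<in> A \<longleftrightarrow> (nxt xs i, xs ! i) \<in> ?A" if i: "i < length xs" for i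
        proof -
          have "xs ! i \<noteq> v" "nxt xs i \<noteq> v" using vx cyc_nb(8)[OF cyc i] i by (auto simp: nth_mem)
          thus ?thesis using noe by auto
        qed
        have cd0: "distinct xs" "3 \<le> length xs" "set xs \<subseteq> C"
          "\<And>i. i < length xs \<Longrightarrow> (xs ! i, nxt xs i) \<in> A \<or> (nxt xs i, xs ! i) \<in> A"
          using cyc unfolding is_cycle_list_def by auto
        show "is_cycle_list ?C ?A xs" unfolding is_cycle_list_def
        proof (intro conjI allI impI)
          show "distinct xs" "3 \<le> length xs" using cd0 by simp_all
          show "set xs \<subseteq> ?C" using cd0(3) vx by blast
          fix i assume i: "i < length xs"
          show "(xs ! i, nxt xs i) \<in> ?A \<or> (nxt xs i, xs ! i) \<in> ?A"
            using cd0(4)[OF i] arcs[OF i] arcs'[OF i] by blast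
        qed
      next
        assume c2: "is_cycle_list ?C ?A xs"
        have cd0: "distinct xs" "3 \<le> length xs" "set xs \<subseteq> ?C"
          "\<And>i. i < length xs \<Longrightarrow> (xs ! i, nxt xs i) \<in> ?A \<or> (nxt xs i, xs ! i) \<in> ?A"
          using c2 unfolding is_cycle_list_def by auto
        show "is_cycle_list C A xs" unfolding is_cycle_list_def
        proof (intro conjI allI impI)
          show "distinct xs" "3 \<le> length xs" using cd0 by simp_all
          show "set xs \<subseteq> C" using cd0(3) by blast
          fix i assume i: "i < length xs"
          show "(xs ! i, nxt xs i) \<in> A \<or> (nxt xs i, xs ! i) \<in> A"
            using cd0(4)[OF i] by blast
        qed
      qed
      have arc_same: "(xs ! i, nxt xs i) \<in> A \<longleftrightarrow> (xs ! i, nxt xs i) \<in> ?A"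
        "(nxt xs i, xs ! i) \<in> A \<longleftrightarrow> (nxt xs i, xs ! i) \<in> ?A"
        if cyc: "is_cycle_list C A xs" and i: "i < length xs" for xs i
      proof -
        have vx: "v \<notin> set xs" by (rule leaf_not_on_cycle[OF cyc uv euv only]) auto
        have "xs ! i \<noteq> v" "nxt xs i \<noteq> v" using vx cyc_nb(8)[OF cyc i] i by (auto simp: nth_mem)
        thus "(xs ! i, nxt xs i) \<in> A \<longleftrightarrow> (xs ! i, nxt xs i) \<in> ?A"
          "(nxt xs i, xs ! i) \<in> A \<longleftrightarrow> (nxt xs i, xs ! i) \<in> ?A" using noe by auto
      qed
      have carcs_eq: "cycle_arcs A xs = cycle_arcs ?A xs" if cyc: "is_cycle_list C A xs" for xs
      proof
        show "cycle_arcs A xs \<subseteq> cycle_arcs ?A xs"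
          unfolding cycle_arcs_def using arc_same[OF cyc] by blast
        show "cycle_arcs ?A xs \<subseteq> cycle_arcs A xs"
          unfolding cycle_arcs_def by blast
      qed
      have cz_eq: "cz \<omega> A xs = cz \<omega> ?A xs" if cyc: "is_cycle_list C A xs" for xs \<omega>
        unfolding cz_def by (rule prod.cong[OF refl]) (use arc_same(1)[OF cyc] in auto)
      have set_eq: "{cycle_arcs A xs |xs. is_cycle_list C A xs} = {cycle_arcs ?A xs |xs. is_cycle_list ?C ?A xs}"
        using cyc_eq carcs_eq by blast
      from IH show ?thesis
      proof
        assume a: "\<not> ?A \<subseteq> ?C \<times> ?C \<and> (\<forall>\<omega>. cnj \<omega> * \<omega> = 1 \<longrightarrow> det_on ?C (herm_lap \<omega> ?C ?A) = 1)"
        have "\<not> A \<subseteq> C \<times> C" using a sub_eq by blast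
        moreover have "\<forall>\<omega>. cnj \<omega> * \<omega> = 1 \<longrightarrow> det_on C (herm_lap \<omega> C A) = 1" using a det_eq by simp
        ultimately show ?thesis by blast
      next
        assume a: "?A \<subseteq> ?C \<times> ?C \<and> (\<exists>xs. is_cycle_list ?C ?A xs)
          \<and> card {cycle_arcs ?A xs |xs. is_cycle_list ?C ?A xs} = 1
          \<and> (\<forall>xs \<omega>. is_cycle_list ?C ?A xs \<longrightarrow> cnj \<omega> * \<omega> = 1 \<longrightarrow>
               det_on ?C (herm_lap \<omega> ?C ?A) = 2 - cz \<omega> ?A xs - cnj (cz \<omega> ?A xs))"
        have "A \<subseteq> C \<times> C" using a sub_eq by blast
        moreover have "\<exists>xs. is_cycle_list C A xs" using a cyc_eq by blast
        moreover have "card {cycle_arcs A xs |xs. is_cycle_list C A xs} = 1" using a set_eq by simp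
        moreover have "\<forall>xs \<omega>. is_cycle_list C A xs \<longrightarrow> cnj \<omega> * \<omega> = 1 \<longrightarrow>
               det_on C (herm_lap \<omega> C A) = 2 - cz \<omega> A xs - cnj (cz \<omega> A xs)"
        proof (intro allI impI)
          fix xs \<omega> assume cyc: "is_cycle_list C A xs" and w: "cnj \<omega> * \<omega> = 1"
          have "det_on C (herm_lap \<omega> C A) = det_on ?C (herm_lap \<omega> ?C ?A)" by (rule det_eq[OF w])
          also have "\<dots> = 2 - cz \<omega> ?A xs - cnj (cz \<omega> ?A xs)" using a cyc cyc_eq w by blast
          finally show "det_on C (herm_lap \<omega> C A) = 2 - cz \<omega> A xs - cnj (cz \<omega> A xs)"
            using cz_eq[OF cyc] by simp
        qed
        ultimately show ?thesis by blast
      qed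
    qed
  next
    case False
    hence deg2: "2 \<le> deg A v" if "v \<in> C" for v using that by force
    have le2: "card (C \<inter> {fst e, snd e}) \<le> 2" for e
    proof -
      have "card (C \<inter> {fst e, snd e}) \<le> card {fst e, snd e}" by (rule card_mono) auto
      also have "\<dots> \<le> 2" by (cases "fst e = snd e") simp_all
      finally show ?thesis .
    qed
    have S: "(\<Sum>v\<in>C. deg A v) = (\<Sum>e\<in>A. card (C \<inter> {fst e, snd e}))" by (rule deg_sum[OF fC fA])
    have S2le: "(\<Sum>e\<in>A. card (C \<inter> {fst e, snd e})) \<le> (\<Sum>e\<in>A. 2)" by (rule sum_mono) (rule le2)
    have S1ge: "(\<Sum>v\<in>C. 2) \<le> (\<Sum>v\<in>C. deg A v)" by (rule sum_mono) (rule deg2)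
    have eqs: "(\<Sum>v\<in>C. (2::nat)) = (\<Sum>e\<in>A. 2)" using cd by simp
    have each_arc: "card (C \<inter> {fst e, snd e}) = 2" if eA: "e \<in> A" for e
    proof (rule ccontr)
      assume "card (C \<inter> {fst e, snd e}) \<noteq> 2"
      hence "card (C \<inter> {fst e, snd e}) < 2" using le2[of e] by simp
      hence "(\<Sum>e\<in>A. card (C \<inter> {fst e, snd e})) < (\<Sum>e\<in>A. 2)"
        using eA le2 by (intro sum_strict_mono_ex1[OF fA]) auto
      thus False using S S1ge eqs by simp
    qed
    have each_deg: "deg A v = 2" if vC: "v \<in> C" for v
    proof (rule ccontr)
      assume "deg A v \<noteq> 2"
      hence "2 < deg A v" using deg2[OF vC] by simp
      hence "(\<Sum>v\<in>C. 2) < (\<Sum>v\<in>C. deg A v)"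
        using vC deg2 by (intro sum_strict_mono_ex1[OF fC]) auto
      thus False using S S2le eqs by simp
    qed
    have sub: "A \<subseteq> C \<times> C"
    proof
      fix e assume eA: "e \<in> A"
      have "fst e \<in> C \<and> snd e \<in> C"
      proof (rule ccontr)
        assume "\<not> (fst e \<in> C \<and> snd e \<in> C)"
        hence "C \<inter> {fst e, snd e} \<subseteq> {fst e} \<or> C \<inter> {fst e, snd e} \<subseteq> {snd e}" by auto
        hence "card (C \<inter> {fst e, snd e}) \<le> 1" using card_mono[of "{fst e}"] card_mono[of "{snd e}"] by fastforce
        thus False using each_arc[OF eA] by simp
      qed
      thus "e \<in> C \<times> C" by (cases e) auto
    qed
    have two: "card (nbr A y) = 2" if "y \<in> C" for y using card_nbr[OF fA or] each_deg[OF that] by simp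
    obtain c where c: "c \<in> C" using ne by blast
    have ex: "\<exists>xs. is_cycle_list C A xs" by (rule exists_cycle[OF fC c sub or two])
    have all: "set xs = C" "cycle_arcs A xs = A" if cyc: "is_cycle_list C A xs" for xs
      using cycle_all[OF cyc fA sub two conn] by auto
    have "{cycle_arcs A xs |xs. is_cycle_list C A xs} = {A}" using ex all by blast
    hence card1: "card {cycle_arcs A xs |xs. is_cycle_list C A xs} = 1" by simp
    have dets: "det_on C (herm_lap \<omega> C A) = 2 - cz \<omega> A xs - cnj (cz \<omega> A xs)"
      if cyc: "is_cycle_list C A xs" and w: "cnj \<omega> * \<omega> = 1" for xs \<omega>
    proof -
      have sC: "set xs \<subseteq> C" using cyc by (simp add: is_cycle_list_def)
      have nb: "nbr A (xs ! i) = {nxt xs i, xs ! pv xs i}" if i: "i < length xs" for i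
      proof -
        have "xs ! i \<in> C" using sC i by auto
        thus ?thesis using cycle_nbr[OF cyc fA i two] by simp
      qed
      have "det_on (set xs) (herm_lap \<omega> C A) = 2 - cz \<omega> A xs - cnj (cz \<omega> A xs)"
        by (rule cycle_det_herm[OF cyc or nb fA w])
      thus ?thesis using all(1)[OF cyc] by simp
    qed
    show ?thesis using sub ex card1 dets by blast
  qed
qed


lemma omega5_cis: "omega5 = cis (2 * pi / 5)"
  unfolding omega5_def cis_conv_exp by (simp add: field_simps)

lemma cos_add_nat_2pi: "cos (x + 2 * pi * real n) = cos x"
proof (induction n)
  case 0 then show ?case by simp
next
  case (Suc n)
  have "x + 2 * pi * real (Suc n) = (x + 2 * pi * real n) + 2 * pi" by (simp add: algebra_simps)
  hence "cos (x + 2 * pi * real (Suc n)) = cos ((x + 2 * pi * real n) + 2 * pi)" by (rule arg_cong)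
  also have "\<dots> = cos (x + 2 * pi * real n)" by (rule cos_periodic)
  finally show ?case using Suc by simp
qed

lemma cos_2pi5: "cos (2 * pi / 5) = (sqrt 5 - 1) / 4"
proof -
  define c where "c = cos (2 * pi / 5)"
  have "3 * (2 * pi / 5) = 2 * pi - 2 * (2 * pi / 5)" by simp
  hence "cos (3 * (2 * pi / 5)) = cos (2 * (2 * pi / 5))" by (metis cos_2pi_minus)
  hence e: "4 * c ^ 3 - 3 * c = 2 * c ^ 2 - 1" unfolding c_def cos_treble_cos cos_double_cos .
  have pos: "0 < c" unfolding c_def by (rule cos_gt_zero_pi) (use pi_gt_zero in linarith)+
  have lt1: "c < 1"
  proof -
    have "cos (2 * pi / 5) < cos 0" by (rule cos_monotone_0_pi) (use pi_gt_zero in auto)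
    thus ?thesis by (simp add: c_def)
  qed
  have "(c - 1) * (4 * c ^ 2 + 2 * c - 1) = 0"
    using e by (simp add: algebra_simps power2_eq_square power3_eq_cube)
  hence q: "4 * c ^ 2 + 2 * c - 1 = 0" using lt1 by simp
  have "(4 * c + 1) ^ 2 = 5"
    using q by (simp add: algebra_simps power2_eq_square)
  hence "sqrt ((4 * c + 1) ^ 2) = sqrt 5" by simp
  hence "4 * c + 1 = sqrt 5" using pos by simp
  thus ?thesis unfolding c_def[symmetric] by simp
qed

lemma cos_4pi5: "cos (4 * pi / 5) = - (sqrt 5 + 1) / 4"
proof -
  have "cos (4 * pi / 5) = cos (2 * (2 * pi / 5))" by simp
  also have "\<dots> = 2 * cos (2 * pi / 5) ^ 2 - 1" by (rule cos_double_cos)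
  also have "\<dots> = 2 * ((sqrt 5 - 1) / 4) ^ 2 - 1" by (simp add: cos_2pi5)
  also have "\<dots> = - (sqrt 5 + 1) / 4"
  proof -
    have s: "sqrt 5 * sqrt 5 = (5::real)" by simp
    show ?thesis by (simp add: power2_eq_square field_simps s)
  qed
  finally show ?thesis .
qed

lemma cosval:
  "cos (2 * pi * real v / 5) = (if v mod 5 = 0 then 1 else if v mod 5 \<in> {1, 4} then (sqrt 5 - 1) / 4
      else - (sqrt 5 + 1) / 4)"
proof -
  define r where "r = v mod 5"
  define q where "q = v div 5"
  have v: "v = 5 * q + r" by (simp add: r_def q_def)
  have "2 * pi * real v / 5 = 2 * pi * real r / 5 + 2 * pi * real q"
    unfolding v by (simp add: algebra_simps)
  hence "cos (2 * pi * real v / 5) = cos (2 * pi * real r / 5 + 2 * pi * real q)" by (rule arg_cong)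
  hence cv: "cos (2 * pi * real v / 5) = cos (2 * pi * real r / 5)" by (simp only: cos_add_nat_2pi)
  have "r < 5" by (simp add: r_def)
  hence "r = 0 \<or> r = 1 \<or> r = 2 \<or> r = 3 \<or> r = 4" by auto
  moreover
  { assume "r = 3"
    hence "2 * pi * real r / 5 = 2 * pi - 4 * pi / 5" by simp
    hence "cos (2 * pi * real r / 5) = cos (4 * pi / 5)" by (metis cos_2pi_minus) }
  moreover
  { assume "r = 4"
    hence "2 * pi * real r / 5 = 2 * pi - 2 * pi / 5" by simp
    hence "cos (2 * pi * real r / 5) = cos (2 * pi / 5)" by (metis cos_2pi_minus) }
  moreover
  { assume "r = 2"
    hence "2 * pi * real r / 5 = 4 * pi / 5" by simp
    hence "cos (2 * pi * real r / 5) = cos (4 * pi / 5)" by simp }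
  ultimately show ?thesis using cv unfolding r_def[symmetric] by (auto simp: cos_2pi5 cos_4pi5)
qed

lemma fval:
  "2 - 2 * cos (2 * pi * real v / 5) = (if v mod 5 = 0 then 0 else if v mod 5 \<in> {1, 4} then (5 - sqrt 5) / 2
      else (5 + sqrt 5) / 2)"
  unfolding cosval by (auto simp: field_simps)

lemma prod_cis: "finite I \<Longrightarrow> (\<Prod>i\<in>I. cis (g i)) = cis (\<Sum>i\<in>I. g i)"
  by (induction I rule: finite_induct) (simp_all add: cis_mult)

lemma cz_cis:
  assumes cyc: "is_cycle_list C A xs" and or: "orient A"
  shows "cz (cis \<theta>) A xs = cis (\<theta> * (real (length xs) - 2 * real (backward_count A xs)))"
proof -
  let ?k = "length xs"
  let ?Q = "\<lambda>i. (nxt xs i, xs ! i) \<in> A"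
  have asym: "(x, y) \<in> A \<Longrightarrow> (y, x) \<notin> A" for x y using or unfolding orient_def by blast
  have one: "(xs ! i, nxt xs i) \<in> A \<longleftrightarrow> \<not> ?Q i" if "i < ?k" for i
    using cyc that asym unfolding is_cycle_list_def by blast
  have "cz (cis \<theta>) A xs = (\<Prod>i<?k. cis (\<theta> - 2 * \<theta> * of_bool (?Q i)))"
    unfolding cz_def
  proof (rule prod.cong[OF refl])
    fix i assume "i \<in> {..<?k}"
    hence i: "i < ?k" by simp
    show "(if (xs ! i, nxt xs i) \<in> A then cis \<theta> else cnj (cis \<theta>)) = cis (\<theta> - 2 * \<theta> * of_bool (?Q i))"
      using one[OF i] by (auto simp: cis_cnj)
  qed
  also have "\<dots> = cis (\<Sum>i<?k. \<theta> - 2 * \<theta> * of_bool (?Q i))" by (rule prod_cis) simp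
  also have "(\<Sum>i<?k. \<theta> - 2 * \<theta> * of_bool (?Q i)) = \<theta> * ?k - 2 * \<theta> * (\<Sum>i<?k. of_bool (?Q i))"
    by (simp add: sum_subtractf sum_distrib_left)
  also have "(\<Sum>i<?k. (of_bool (?Q i) :: real)) = real (backward_count A xs)"
  proof -
    have "(\<Sum>i<?k. (of_bool (?Q i) :: real)) = real (card ({..<?k} \<inter> {i. ?Q i}))" by simp
    also have "{..<?k} \<inter> {i. ?Q i} = {i. i < ?k \<and> ?Q i}" by auto
    finally show ?thesis by (simp add: backward_count_def)
  qed
  finally show ?thesis by (simp add: algebra_simps)
qed

lemma backward_le: "backward_count A xs \<le> length xs"
proof -
  have "backward_count A xs \<le> card {..<length xs}"
    unfolding backward_count_def by (rule card_mono) auto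
  thus ?thesis by simp
qed

lemma cos_cv:
  "cos (\<theta> * (real (length xs) - 2 * real (backward_count A xs))) = cos (\<theta> * real (cycle_value A xs))"
proof -
  let ?k = "length xs" and ?b = "backward_count A xs"
  have bk: "?b \<le> ?k" by (rule backward_le)
  show ?thesis
  proof (cases "?b \<le> ?k - ?b")
    case True
    hence "cycle_value A xs = ?k - 2 * ?b" by (simp add: cycle_value_def Let_def)
    moreover have "real (?k - 2 * ?b) = real ?k - 2 * real ?b" using True bk by (simp add: of_nat_diff)
    ultimately show ?thesis by simp
  next
    case False
    hence "cycle_value A xs = ?k - 2 * (?k - ?b)" by (simp add: cycle_value_def Let_def)
    moreover have "real (?k - 2 * (?k - ?b)) = - (real ?k - 2 * real ?b)" using False bk by (simp add: of_nat_diff)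
    ultimately show ?thesis by (metis cos_minus mult_minus_right)
  qed
qed

lemma two_minus_cis: "2 - cis t - cnj (cis t) = complex_of_real (2 - 2 * cos t)"
  by (simp add: complex_eq_iff cis_cnj)


lemma unit_cis: "cnj (cis t) * cis t = 1" by (simp add: cis_cnj cis_mult)

lemma omega5_sq: "omega5 ^ 2 = cis (2 * (2 * pi / 5))"
  unfolding omega5_cis DeMoivre by simp

lemma fval2: "2 * (2 * pi / 5) * real v = 2 * pi * real (2 * v) / 5" by simp

lemma comp_vals:
  assumes ok: "comp_ok C (comp_arcs E' C)" and nv: "\<not> vanishing_comp E' C"
  shows "\<not> (alpha_comp E' C \<and> beta_comp E' C)"
    and "det_on C (herm_lap omega5 C (comp_arcs E' C)) = complex_of_real
          (if alpha_comp E' C then (5 + sqrt 5) / 2 else if beta_comp E' C then (5 - sqrt 5) / 2 else 1)"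
    and "det_on C (herm_lap (omega5 ^ 2) C (comp_arcs E' C)) = complex_of_real
          (if alpha_comp E' C then (5 - sqrt 5) / 2 else if beta_comp E' C then (5 + sqrt 5) / 2 else 1)"
proof -
  let ?A = "comp_arcs E' C"
  have or: "orient ?A" using ok by (simp add: comp_ok_def)
  have w1: "cnj omega5 * omega5 = 1" unfolding omega5_cis by (rule unit_cis)
  have w2: "cnj (omega5 ^ 2) * omega5 ^ 2 = 1" unfolding omega5_sq by (rule unit_cis)
  have ab: "(5 + sqrt 5) / 2 \<noteq> (5 - sqrt 5) / (2::real)" by simp
  have "\<not> (alpha_comp E' C \<and> beta_comp E' C)
    \<and> det_on C (herm_lap omega5 C (comp_arcs E' C)) = complex_of_real
          (if alpha_comp E' C then (5 + sqrt 5) / 2 else if beta_comp E' C then (5 - sqrt 5) / 2 else 1)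
    \<and> det_on C (herm_lap (omega5 ^ 2) C (comp_arcs E' C)) = complex_of_real
          (if alpha_comp E' C then (5 - sqrt 5) / 2 else if beta_comp E' C then (5 + sqrt 5) / 2 else 1)"
  using comp_thm[OF ok]
  proof
    assume t: "\<not> ?A \<subseteq> C \<times> C \<and> (\<forall>\<omega>. cnj \<omega> * \<omega> = 1 \<longrightarrow> det_on C (herm_lap \<omega> C ?A) = 1)"
    have "\<not> unicyclic_comp E' C" using t by (simp add: unicyclic_comp_def)
    hence "\<not> alpha_comp E' C" "\<not> beta_comp E' C" by (auto simp: alpha_comp_def beta_comp_def)
    thus ?thesis using t w1 w2 by simp
  next
    assume u: "?A \<subseteq> C \<times> C \<and> (\<exists>xs. is_cycle_list C ?A xs)
          \<and> card {cycle_arcs ?A xs |xs. is_cycle_list C ?A xs} = 1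
          \<and> (\<forall>xs \<omega>. is_cycle_list C ?A xs \<longrightarrow> cnj \<omega> * \<omega> = 1 \<longrightarrow>
               det_on C (herm_lap \<omega> C ?A) = 2 - cz \<omega> ?A xs - cnj (cz \<omega> ?A xs))"
    have U: "unicyclic_comp E' C" using u by (simp add: unicyclic_comp_def)
    have gen: "det_on C (herm_lap (cis \<theta>) C ?A) = complex_of_real (2 - 2 * cos (\<theta> * real (cycle_value ?A xs)))"
      if cyc: "is_cycle_list C ?A xs" for xs \<theta>
    proof -
      have "det_on C (herm_lap (cis \<theta>) C ?A) = 2 - cz (cis \<theta>) ?A xs - cnj (cz (cis \<theta>) ?A xs)"
        using u cyc unit_cis by blast
      also have "\<dots> = complex_of_real (2 - 2 * cos (\<theta> * (real (length xs) - 2 * real (backward_count ?A xs))))"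
        unfolding cz_cis[OF cyc or] by (rule two_minus_cis)
      finally show ?thesis unfolding cos_cv .
    qed
    have D1: "det_on C (herm_lap omega5 C ?A) = complex_of_real (2 - 2 * cos (2 * pi * real (cycle_value ?A xs) / 5))"
      if cyc: "is_cycle_list C ?A xs" for xs
      using gen[OF cyc, of "2 * pi / 5"] unfolding omega5_cis by simp
    have D2: "det_on C (herm_lap (omega5 ^ 2) C ?A) = complex_of_real (2 - 2 * cos (2 * pi * real (2 * cycle_value ?A xs) / 5))"
      if cyc: "is_cycle_list C ?A xs" for xs
      using gen[OF cyc, of "2 * (2 * pi / 5)"] unfolding omega5_sq fval2 .
    obtain xs where cyc: "is_cycle_list C ?A xs" using u by blast
    define v where "v = cycle_value ?A xs"
    have vn: "v mod 5 \<noteq> 0" using nv U cyc unfolding vanishing_comp_def v_def by auto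
    have m2: "(2 * v) mod 5 = (2 * (v mod 5)) mod 5" by (simp add: mod_mult_right_eq)
    have "v mod 5 < 5" by simp
    hence cases: "v mod 5 \<in> {2, 3} \<or> v mod 5 \<in> {1, 4}" using vn by auto
    thus ?thesis
    proof
      assume a: "v mod 5 \<in> {2, 3}"
      have al: "alpha_comp E' C" using U cyc a unfolding alpha_comp_def v_def by blast
      have r1: "2 - 2 * cos (2 * pi * real v / 5) = (5 + sqrt 5) / 2" using fval[of v] a by auto
      have d1: "det_on C (herm_lap omega5 C ?A) = complex_of_real ((5 + sqrt 5) / 2)"
        using D1[OF cyc] unfolding v_def[symmetric] r1 .
      have "(2 * v) mod 5 \<in> {1, 4}" using a m2 by auto
      hence r2: "2 - 2 * cos (2 * pi * real (2 * v) / 5) = (5 - sqrt 5) / 2" using fval[of "2 * v"] by auto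
      have d2: "det_on C (herm_lap (omega5 ^ 2) C ?A) = complex_of_real ((5 - sqrt 5) / 2)"
        using D2[OF cyc] unfolding v_def[symmetric] r2 .
      have nb: "\<not> beta_comp E' C"
      proof
        assume "beta_comp E' C"
        then obtain ys where ys: "is_cycle_list C ?A ys" "cycle_value ?A ys mod 5 \<in> {1, 4}"
          unfolding beta_comp_def by blast
        have r: "2 - 2 * cos (2 * pi * real (cycle_value ?A ys) / 5) = (5 - sqrt 5) / 2"
          using fval[of "cycle_value ?A ys"] ys(2) by auto
        have "det_on C (herm_lap omega5 C ?A) = complex_of_real ((5 - sqrt 5) / 2)"
          using D1[OF ys(1)] unfolding r .
        thus False using d1 ab of_real_eq_iff by metis
      qed
      show ?thesis using al nb d1 d2 by simp
    next
      assume a: "v mod 5 \<in> {1, 4}"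
      have be: "beta_comp E' C" using U cyc a unfolding beta_comp_def v_def by blast
      have r1: "2 - 2 * cos (2 * pi * real v / 5) = (5 - sqrt 5) / 2" using fval[of v] a by auto
      have d1: "det_on C (herm_lap omega5 C ?A) = complex_of_real ((5 - sqrt 5) / 2)"
        using D1[OF cyc] unfolding v_def[symmetric] r1 .
      have "(2 * v) mod 5 \<in> {2, 3}" using a m2 by auto
      hence r2: "2 - 2 * cos (2 * pi * real (2 * v) / 5) = (5 + sqrt 5) / 2" using fval[of "2 * v"] by auto
      have d2: "det_on C (herm_lap (omega5 ^ 2) C ?A) = complex_of_real ((5 + sqrt 5) / 2)"
        using D2[OF cyc] unfolding v_def[symmetric] r2 .
      have na: "\<not> alpha_comp E' C"
      proof
        assume "alpha_comp E' C"
        then obtain ys where ys: "is_cycle_list C ?A ys" "cycle_value ?A ys mod 5 \<in> {2, 3}"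
          unfolding alpha_comp_def by blast
        have r: "2 - 2 * cos (2 * pi * real (cycle_value ?A ys) / 5) = (5 + sqrt 5) / 2"
          using fval[of "cycle_value ?A ys"] ys(2) by auto
        have "det_on C (herm_lap omega5 C ?A) = complex_of_real ((5 + sqrt 5) / 2)"
          using D1[OF ys(1)] unfolding r .
        thus False using d1 ab of_real_eq_iff by metis
      qed
      show ?thesis using na be d1 d2 by simp
    qed
  qed
  thus "\<not> (alpha_comp E' C \<and> beta_comp E' C)"
    and "det_on C (herm_lap omega5 C (comp_arcs E' C)) = complex_of_real
          (if alpha_comp E' C then (5 + sqrt 5) / 2 else if beta_comp E' C then (5 - sqrt 5) / 2 else 1)"
    and "det_on C (herm_lap (omega5 ^ 2) C (comp_arcs E' C)) = complex_of_real
          (if alpha_comp E' C then (5 - sqrt 5) / 2 else if beta_comp E' C then (5 + sqrt 5) / 2 else 1)"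
    by blast+
qed


lemma adj_sym: "(x, y) \<in> adj_rel V' E' \<Longrightarrow> (y, x) \<in> adj_rel V' E'"
  by (auto simp: adj_rel_def)

lemma rtrancl_adj_sym: "(x, y) \<in> (adj_rel V' E')\<^sup>* \<Longrightarrow> (y, x) \<in> (adj_rel V' E')\<^sup>*"
proof (induction rule: rtrancl_induct)
  case base show ?case by simp
next
  case (step y z)
  thus ?case using adj_sym[OF step(2)] by (meson converse_rtrancl_into_rtrancl)
qed

lemma prod_if_pow:
  assumes "finite S"
  shows "(\<Prod>C\<in>S. if P C then (x::real) else 1) = x ^ card {C \<in> S. P C}"
proof -
  have "(\<Prod>C\<in>{C \<in> S. P C}. x) = (\<Prod>C\<in>S. if P C then x else 1)"
    by (rule prod.inter_filter[OF assms])
  thus ?thesis by simp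
qed

theorem mainTheorem14:
  fixes V V' :: "'a set" and E E' :: "('a \<times> 'a) set" and n\<^sub>\<alpha> n\<^sub>\<beta> :: nat
  assumes "oriented_graph V E"
    and "substructure V E V' E'"
    and "all_regular V' E'"
    and "n\<^sub>\<alpha> = card {C \<in> components V' E'. alpha_comp E' C}"
    and "n\<^sub>\<beta> = card {C \<in> components V' E'. beta_comp E' C}"
    and "\<forall>C \<in> components V' E'. \<not> vanishing_comp E' C"
  shows "Im (det_on V' (herm_lap omega5 V' E')) = 0
    \<and> Im (det_on V' (herm_lap (omega5 ^ 2) V' E')) = 0
    \<and> real (n\<^sub>\<alpha> + n\<^sub>\<beta>) = log 5 (Re (det_on V' (herm_lap omega5 V' E'))
                               * Re (det_on V' (herm_lap (omega5 ^ 2) V' E')))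
    \<and> real n\<^sub>\<alpha> - real n\<^sub>\<beta> = log (golden ^ 2) (Re (det_on V' (herm_lap omega5 V' E'))
                               / Re (det_on V' (herm_lap (omega5 ^ 2) V' E')))"
proof -
  let ?R = "conn_rel V' E'"
  let ?P = "components V' E'"
  from assms(1) have fV: "finite V" and EV: "E \<subseteq> V \<times> V" and irrE: "\<And>u. (u, u) \<notin> E"
    and asymE: "\<And>u v. (u, v) \<in> E \<Longrightarrow> (v, u) \<notin> E"
    unfolding oriented_graph_def by auto
  from assms(2) have V'V: "V' \<subseteq> V" and E'E: "E' \<subseteq> E" unfolding substructure_def by auto
  have fV': "finite V'" by (rule finite_subset[OF V'V fV])
  have fE: "finite E" by (rule finite_subset[OF EV]) (simp add: fV)
  have fE': "finite E'" by (rule finite_subset[OF E'E fE])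
  have Rsub: "?R \<subseteq> V' \<times> V'" by (auto simp: conn_rel_def)
  have eq: "equiv V' ?R"
  proof (rule equivI)
    show "?R \<subseteq> V' \<times> V'" by (rule Rsub)
    show "refl_on V' ?R" by (auto simp: refl_on_def conn_rel_def)
    show "sym ?R"
    proof (rule symI)
      fix x y assume "(x, y) \<in> ?R"
      hence "x \<in> V'" "y \<in> V'" "(x, y) \<in> (adj_rel V' E')\<^sup>*" by (auto simp: conn_rel_def)
      thus "(y, x) \<in> ?R" using rtrancl_adj_sym[of x y] by (simp add: conn_rel_def)
    qed
    show "trans ?R"
    proof (rule transI)
      fix x y z assume "(x, y) \<in> ?R" "(y, z) \<in> ?R"
      hence "x \<in> V'" "z \<in> V'" "(x, y) \<in> (adj_rel V' E')\<^sup>*" "(y, z) \<in> (adj_rel V' E')\<^sup>*"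
        by (auto simp: conn_rel_def)
      thus "(x, z) \<in> ?R" using rtrancl_trans[of x y _ z] by (simp add: conn_rel_def)
    qed
  qed
  have fP: "finite ?P" unfolding components_def by (rule finite_quotient[OF fV' Rsub])
  have UP: "\<Union>?P = V'" unfolding components_def by (rule Union_quotient[OF eq])
  have Psub: "C \<subseteq> V'" if "C \<in> ?P" for C
    using in_quotient_imp_subset[OF eq] that unfolding components_def by blast
  have closed: "y \<in> C" if "C \<in> ?P" "x \<in> C" "(x, y) \<in> ?R" for C x y
    using in_quotient_imp_closed[OF eq] that unfolding components_def by blast
  have inC: "(x, y) \<in> ?R" if C: "C \<in> ?P" and xy: "x \<in> C" "y \<in> C" for C x y
  proof -
    obtain a where a: "C = ?R `` {a}" "a \<in> V'" using C unfolding components_def by (rule quotientE)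
    have "(a, x) \<in> ?R" "(a, y) \<in> ?R" using a xy by auto
    thus ?thesis using eq unfolding equiv_def sym_def trans_def by blast
  qed
  have disj: "C \<inter> D = {}" if "C \<in> ?P" "D \<in> ?P" "C \<noteq> D" for C D
    using quotient_disj[OF eq] that unfolding components_def by blast
  have ok: "comp_ok C (comp_arcs E' C)" if C: "C \<in> ?P" for C
    unfolding comp_ok_def
  proof (intro conjI ballI)
    show "finite C" using Psub[OF C] fV' finite_subset by blast
    show "finite (comp_arcs E' C)" using fE' by (simp add: comp_arcs_def)
    show "C \<noteq> {}" using in_quotient_imp_non_empty[OF eq] C unfolding components_def by blast
    show "orient (comp_arcs E' C)" using irrE asymE E'E by (auto simp: orient_def comp_arcs_def)
    show "fst e \<in> C \<or> snd e \<in> C" if "e \<in> comp_arcs E' C" for e using that by (simp add: comp_arcs_def)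
    show "card C = card (comp_arcs E' C)" using assms(3) C unfolding all_regular_def by blast
    fix x y assume x: "x \<in> C" and y: "y \<in> C"
    have "(x, y) \<in> (adj_rel V' E')\<^sup>*" using inC[OF C x y] by (simp add: conn_rel_def)
    hence "y \<in> C \<and> (x, y) \<in> (adj_rel C (comp_arcs E' C))\<^sup>*"
    proof (induction rule: rtrancl_induct)
      case base thus ?case using x by simp
    next
      case (step z z')
      have zC: "z \<in> C" using step.IH by simp
      have zz: "z \<in> V'" "z' \<in> V'" "(z, z') \<in> E' \<or> (z', z) \<in> E'" using step.hyps(2) by (auto simp: adj_rel_def)
      have "(z, z') \<in> ?R" using zz by (auto simp: conn_rel_def adj_rel_def)
      hence z'C: "z' \<in> C" using closed[OF C zC] by blast
      have "(z, z') \<in> adj_rel C (comp_arcs E' C)"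
        using zz zC z'C by (auto simp: adj_rel_def comp_arcs_def)
      thus ?case using step.IH z'C by (meson rtrancl.rtrancl_into_rtrancl)
    qed
    thus "(x, y) \<in> (adj_rel C (comp_arcs E' C))\<^sup>*" by simp
  qed
  have hq: "det_on C (herm_lap \<omega> V' E') = det_on C (herm_lap \<omega> C (comp_arcs E' C))" if C: "C \<in> ?P" for C \<omega>
  proof (rule det_on_cong)
    fix i j assume i: "i \<in> C" and j: "j \<in> C"
    have s: "{e \<in> E'. fst e = i \<or> snd e = i} = {e \<in> comp_arcs E' C. fst e = i \<or> snd e = i}"
      using i by (auto simp: comp_arcs_def)
    have a1: "(i, j) \<in> E' \<longleftrightarrow> (i, j) \<in> comp_arcs E' C" using i by (auto simp: comp_arcs_def)
    have a2: "(j, i) \<in> E' \<longleftrightarrow> (j, i) \<in> comp_arcs E' C" using i by (auto simp: comp_arcs_def)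
    show "herm_lap \<omega> V' E' i j = herm_lap \<omega> C (comp_arcs E' C) i j"
      unfolding herm_lap_def s a1 a2 ..
  qed
  have zero: "herm_lap \<omega> V' E' i j = 0"
    if CD: "C \<in> ?P" "D \<in> ?P" "C \<noteq> D" and ij: "i \<in> C" "j \<in> D" for C D i j \<omega>
  proof -
    have ne: "i \<noteq> j" using disj[OF CD] ij by blast
    have "(i, j) \<notin> E' \<and> (j, i) \<notin> E'"
    proof (rule ccontr)
      assume "\<not> ((i, j) \<notin> E' \<and> (j, i) \<notin> E')"
      hence "(i, j) \<in> adj_rel V' E'" using Psub[OF CD(1)] Psub[OF CD(2)] ij by (auto simp: adj_rel_def)
      hence "(i, j) \<in> ?R" using Psub[OF CD(1)] Psub[OF CD(2)] ij by (auto simp: conn_rel_def)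
      hence "j \<in> C" using closed[OF CD(1) ij(1)] by blast
      thus False using disj[OF CD] ij by blast
    qed
    thus ?thesis using ne by (simp add: herm_lap_def)
  qed
  have fact: "det_on V' (herm_lap \<omega> V' E') = (\<Prod>C\<in>?P. det_on C (herm_lap \<omega> V' E'))" for \<omega>
  proof -
    have "det_on (\<Union>?P) (herm_lap \<omega> V' E') = (\<Prod>C\<in>?P. det_on C (herm_lap \<omega> V' E'))"
    proof (rule det_on_partition[OF fP])
      show "finite C" if "C \<in> ?P" for C using Psub[OF that] fV' finite_subset by blast
      show "C \<inter> D = {}" if "C \<in> ?P" "D \<in> ?P" "C \<noteq> D" for C D using disj[OF that] .
      show "herm_lap \<omega> V' E' i j = 0" if "C \<in> ?P" "D \<in> ?P" "C \<noteq> D" "i \<in> C" "j \<in> D" for C D i j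
        using zero[OF that] .
    qed
    thus ?thesis unfolding UP .
  qed
  define a where "a = (5 + sqrt 5) / (2::real)"
  define b where "b = (5 - sqrt 5) / (2::real)"
  let ?al = "\<lambda>C. alpha_comp E' C" and ?be = "\<lambda>C. beta_comp E' C"
  have nv: "\<not> vanishing_comp E' C" if "C \<in> ?P" for C using assms(6) that by blast
  note cv = comp_vals[OF ok nv]
  have g1: "(if ?al C then a else if ?be C then b else 1) = (if ?al C then a else 1) * (if ?be C then b else 1)"
    if "C \<in> ?P" for C using cv(1)[OF that that] by auto
  have g2: "(if ?al C then b else if ?be C then a else 1) = (if ?al C then b else 1) * (if ?be C then a else 1)"
    if "C \<in> ?P" for C using cv(1)[OF that that] by auto
  have D1: "det_on V' (herm_lap omega5 V' E') = complex_of_real (a ^ n\<^sub>\<alpha> * b ^ n\<^sub>\<beta>)"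
  proof -
    have "det_on V' (herm_lap omega5 V' E') = (\<Prod>C\<in>?P. complex_of_real (if ?al C then a else if ?be C then b else 1))"
      unfolding fact by (rule prod.cong[OF refl]) (simp add: hq cv(2) a_def b_def)
    also have "\<dots> = complex_of_real (\<Prod>C\<in>?P. (if ?al C then a else 1) * (if ?be C then b else 1))"
      unfolding of_real_prod by (rule prod.cong[OF refl]) (simp add: g1)
    also have "(\<Prod>C\<in>?P. (if ?al C then a else 1) * (if ?be C then b else 1)) = a ^ n\<^sub>\<alpha> * b ^ n\<^sub>\<beta>"
      unfolding prod.distrib prod_if_pow[OF fP] assms(4) assms(5) ..
    finally show ?thesis .
  qed
  have D2: "det_on V' (herm_lap (omega5 ^ 2) V' E') = complex_of_real (b ^ n\<^sub>\<alpha> * a ^ n\<^sub>\<beta>)"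
  proof -
    have "det_on V' (herm_lap (omega5 ^ 2) V' E') = (\<Prod>C\<in>?P. complex_of_real (if ?al C then b else if ?be C then a else 1))"
      unfolding fact by (rule prod.cong[OF refl]) (simp add: hq cv(3) a_def b_def)
    also have "\<dots> = complex_of_real (\<Prod>C\<in>?P. (if ?al C then b else 1) * (if ?be C then a else 1))"
      unfolding of_real_prod by (rule prod.cong[OF refl]) (simp add: g2)
    also have "(\<Prod>C\<in>?P. (if ?al C then b else 1) * (if ?be C then a else 1)) = b ^ n\<^sub>\<alpha> * a ^ n\<^sub>\<beta>"
      unfolding prod.distrib prod_if_pow[OF fP] assms(4) assms(5) ..
    finally show ?thesis .
  qed
  have s5: "sqrt 5 * sqrt 5 = (5::real)" by simp
  have s5lt: "sqrt 5 < (5::real)"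
  proof -
    have "sqrt 5 < sqrt ((5::real) ^ 2)" unfolding real_sqrt_less_iff by simp
    thus ?thesis by simp
  qed
  have apos: "0 < a" unfolding a_def by (simp add: add_pos_nonneg)
  have bpos: "0 < b" unfolding b_def using s5lt by simp
  have ab5: "a * b = 5" unfolding a_def b_def by (simp add: field_simps s5)
  have gold: "golden ^ 2 = a / b"
  proof -
    have "golden ^ 2 * b = a" unfolding golden_def a_def b_def by (simp add: power2_eq_square field_simps s5)
    thus ?thesis using bpos by (simp add: field_simps)
  qed
  have gpos: "0 < golden ^ 2" using apos bpos gold by simp
  have g1': "golden ^ 2 \<noteq> 1"
  proof -
    have "1 < golden" unfolding golden_def by simp
    hence "1 < golden ^ 2" by (simp add: one_less_power)
    thus ?thesis by simp
  qed
  have part3: "real (n\<^sub>\<alpha> + n\<^sub>\<beta>) = log 5 ((a ^ n\<^sub>\<alpha> * b ^ n\<^sub>\<beta>) * (b ^ n\<^sub>\<alpha> * a ^ n\<^sub>\<beta>))"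
  proof -
    have "(a ^ n\<^sub>\<alpha> * b ^ n\<^sub>\<beta>) * (b ^ n\<^sub>\<alpha> * a ^ n\<^sub>\<beta>) = (a * b) ^ (n\<^sub>\<alpha> + n\<^sub>\<beta>)"
      by (simp add: power_add power_mult_distrib algebra_simps)
    also have "\<dots> = 5 ^ (n\<^sub>\<alpha> + n\<^sub>\<beta>)" using ab5 by simp
    finally have e: "(a ^ n\<^sub>\<alpha> * b ^ n\<^sub>\<beta>) * (b ^ n\<^sub>\<alpha> * a ^ n\<^sub>\<beta>) = 5 ^ (n\<^sub>\<alpha> + n\<^sub>\<beta>)" .
    show ?thesis unfolding e by (simp add: log_nat_power)
  qed
  have part4: "real n\<^sub>\<alpha> - real n\<^sub>\<beta> = log (golden ^ 2) ((a ^ n\<^sub>\<alpha> * b ^ n\<^sub>\<beta>) / (b ^ n\<^sub>\<alpha> * a ^ n\<^sub>\<beta>))"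
  proof -
    have "(a ^ n\<^sub>\<alpha> * b ^ n\<^sub>\<beta>) / (b ^ n\<^sub>\<alpha> * a ^ n\<^sub>\<beta>) = (a / b) ^ n\<^sub>\<alpha> / (a / b) ^ n\<^sub>\<beta>"
      using apos bpos by (simp add: power_divide field_simps)
    also have "\<dots> = (golden ^ 2) ^ n\<^sub>\<alpha> / (golden ^ 2) ^ n\<^sub>\<beta>" using gold by simp
    finally have e: "(a ^ n\<^sub>\<alpha> * b ^ n\<^sub>\<beta>) / (b ^ n\<^sub>\<alpha> * a ^ n\<^sub>\<beta>) = (golden ^ 2) ^ n\<^sub>\<alpha> / (golden ^ 2) ^ n\<^sub>\<beta>" .
    have "log (golden ^ 2) ((golden ^ 2) ^ n\<^sub>\<alpha> / (golden ^ 2) ^ n\<^sub>\<beta>)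
        = log (golden ^ 2) ((golden ^ 2) ^ n\<^sub>\<alpha>) - log (golden ^ 2) ((golden ^ 2) ^ n\<^sub>\<beta>)"
      using gpos by (intro log_divide_pos) auto
    also have "\<dots> = real n\<^sub>\<alpha> - real n\<^sub>\<beta>"
      using gpos g1' by (simp add: log_nat_power)
    finally show ?thesis unfolding e by simp
  qed
  show ?thesis unfolding D1 D2 using part3 part4 by simp
qed


end
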